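(* Let $F(x)=\sum_{n\ge0}t^n\sum_{(P,Q)\in\mathcal{I}_n}x^{\mathrm{contact}(P)}$ and $$J(x,y)\equiv J(t,x,y,r,s)=\sum_{n\ge0}t^n\sum_{(P,Q)\in\mathcal{I}_n}\sum_{j=1}^nr^{\tilde P(j)}s^{\tilde Q(j)}x^{\mathrm{contact}'_{\le j}(P)}y^{\mathrm{contact}'_{> j}(P)}.$$ Then $$J(x,y)=x\frac{F(y)-y}{y}+rstx\frac{J(1,y)-J(1,1)}{y-1}F(y)+stx^2\frac{J(x,y)-J(1,y)}{(x-1)y}F(y)+xtJ(x,y)\frac{F(x)-F(1)}{x-1}.$$
   Context: A Dyck path of size $n$ is a lattice path from $(0,0)$ to $(2n,0)$ with $n$ up-steps $(1,1)$ and $n$ down-steps $(1,-1)$ never going below height $0$. For $j\in\{1,\dots,n\}$, $\tilde P(j)$ is the height of the initial point of the $j$-th up-step of $P$. A contact is a vertex of the path on the $x$-axis (including both endpoints); $\mathrm{contact}(P)$ is their number; $\mathrm{contact}'_{\le j}(P)$ is the number of contacts of $P$ whose abscissa is at most the initial abscissa of the $j$-th up-step of $P$, and $\mathrm{contact}'_{>j}(P)$ the number of contacts with abscissa strictly larger than it. The Tamari order is the reflexive transitive closure of the relation: if $P$ has a down-step $d$ immediately followed by an up-step and $\mathfrak{e}$ is the shortest excursion following $d$ (staying strictly above its starting height except at its last point), the path obtained by exchanging $d$ and $\mathfrak{e}$ is larger than $P$. $\mathcal{I}_n$ is the set of pairs $(P,Q)$ of Dyck paths of size $n$ with $P\le Q$.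 *)

theory Defs
  imports "HOL-Computational_Algebra.Formal_Power_Series"
begin

text \<open>Dyck paths are bool lists: True = up-step (1,1), False = down-step (1,-1).\<close>

definition stp :: "bool \<Rightarrow> int" where
  "stp b = (if b then 1 else -1)"

definition height :: "bool list \<Rightarrow> nat \<Rightarrow> int" where
  "height P k = sum_list (map stp (take k P))"

definition dyck :: "nat \<Rightarrow> bool list \<Rightarrow> bool" where
  "dyck n P \<longleftrightarrow> length P = 2 * n \<and> length (filter id P) = n
     \<and> (\<forall>k \<le> length P. height P k \<ge> 0)"

text \<open>Abscissa of the initial point of the j-th up-step (j counted from 1).\<close>
definition upstart :: "bool list \<Rightarrow> nat \<Rightarrow> nat" where
  "upstart P j = filter (\<lambda>i. P ! i) [0..<length P] ! (j - 1)"

definition Ptilde :: "bool list \<Rightarrow> nat \<Rightarrow> int" where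
  "Ptilde P j = height P (upstart P j)"

definition contacts :: "bool list \<Rightarrow> nat set" where
  "contacts P = {k. k \<le> length P \<and> height P k = 0}"

definition contact :: "bool list \<Rightarrow> nat" where
  "contact P = card (contacts P)"

definition contact_le :: "bool list \<Rightarrow> nat \<Rightarrow> nat" where
  "contact_le P j = card {k \<in> contacts P. k \<le> upstart P j}"

definition contact_gt :: "bool list \<Rightarrow> nat \<Rightarrow> nat" where
  "contact_gt P j = card {k \<in> contacts P. k > upstart P j}"

text \<open>Elementary Tamari move: the down-step at position i (steps indexed from 0) is
  followed by an up-step; the shortest excursion following it occupies steps i+1 .. m-1
  (from vertex i+1 to vertex m); exchange the down-step and the excursion.\<close>
definition tamari_step :: "bool list \<Rightarrow> bool list \<Rightarrow> bool" where
  "tamari_step P Q \<longleftrightarrow> (\<exists>i m. i + 1 < length P \<and> \<not> P ! i \<and> P ! (i + 1)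
     \<and> i + 1 < m \<and> m \<le> length P
     \<and> height P m = height P (i + 1)
     \<and> (\<forall>k. i + 1 < k \<and> k < m \<longrightarrow> height P k > height P (i + 1))
     \<and> Q = take i P @ take (m - (i + 1)) (drop (i + 1) P) @ [False] @ drop m P)"

definition tamari_le :: "bool list \<Rightarrow> bool list \<Rightarrow> bool" where
  "tamari_le = tamari_step\<^sup>*\<^sup>*"

definition intervals :: "nat \<Rightarrow> (bool list \<times> bool list) set" where
  "intervals n = {(P, Q). dyck n P \<and> dyck n Q \<and> tamari_le P Q}"

text \<open>Generating functions in t, with the catalytic/auxiliary variables specialised to
  field elements.\<close>
definition Fgf :: "'a::field \<Rightarrow> 'a fps" where
  "Fgf x = Abs_fps (\<lambda>n. \<Sum>(P, Q) \<in> intervals n. x ^ contact P)"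

definition Jgf :: "'a::field \<Rightarrow> 'a \<Rightarrow> 'a \<Rightarrow> 'a \<Rightarrow> 'a fps" where
  "Jgf x y r s = Abs_fps (\<lambda>n. \<Sum>(P, Q) \<in> intervals n. \<Sum>j = 1..n.
      r ^ nat (Ptilde P j) * s ^ nat (Ptilde Q j) * x ^ contact_le P j * y ^ contact_gt P j)"

end

theory Submission
  imports Defs
begin

definition hgt :: "bool list \<Rightarrow> int" where "hgt xs = sum_list (map stp xs)"
definition bal :: "bool list \<Rightarrow> bool" where "bal xs \<longleftrightarrow> hgt xs = 0 \<and> (\<forall>k. height xs k \<ge> 0)"

lemma stp_simps[simp]: "stp True = 1" "stp False = -1" by (auto simp: stp_def)
lemma hgt_simps[simp]: "hgt [] = 0" "hgt (b # xs) = stp b + hgt xs" "hgt (xs @ ys) = hgt xs + hgt ys"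
  by (auto simp: hgt_def)
lemma height_hgt: "height P k = hgt (take k P)" by (simp add: height_def hgt_def)
lemma height_0[simp]: "height P 0 = 0" by (simp add: height_hgt)
lemma height_Cons: "height (b # A) k = (if k = 0 then 0 else stp b + height A (k - 1))"
  by (cases k) (auto simp: height_hgt)
lemma height_append: "height (A @ B) k = (if k \<le> length A then height A k else hgt A + height B (k - length A))"
  by (auto simp: height_hgt)
lemma height_full: "length A \<le> k \<Longrightarrow> height A k = hgt A" by (simp add: height_hgt)
lemma height_Suc: "k < length A \<Longrightarrow> height A (Suc k) = height A k + stp (A ! k)"
  by (simp add: height_hgt take_Suc_conv_app_nth)
lemma height_drop: "a \<le> length P \<Longrightarrow> height P (a + t) = height P a + height (drop a P) t"
proof -
  assume "a \<le> length P"
  then have "P = take a P @ drop a P" by simp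
  then have "height P (a+t) = height (take a P @ drop a P) (a+t)" by simp
  also have "\<dots> = height P a + height (drop a P) t" using \<open>a \<le> length P\<close>
    by (simp add: height_hgt take_add)
  finally show ?thesis .
qed

lemma bal_Nil[simp]: "bal []" by (simp add: bal_def height_hgt)
lemma bal_app: "bal A \<Longrightarrow> bal B \<Longrightarrow> bal (A @ B)"
  by (auto simp: bal_def height_append)
lemma bal_app_right: "bal (A @ B) \<Longrightarrow> bal A \<Longrightarrow> bal B"
  unfolding bal_def
proof (intro conjI allI; (elim conjE)?)
  fix k assume h: "\<forall>k. 0 \<le> height (A @ B) k" "hgt A = 0"
  from h(1)[rule_format, of "length A + k"] h(2) show "0 \<le> height B k" by (cases "k = 0") (auto simp: height_append)
qed auto
lemma bal_app_left: "bal (A @ B) \<Longrightarrow> hgt A = 0 \<Longrightarrow> bal A"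
  unfolding bal_def
proof (intro conjI allI; (elim conjE)?)
  fix k assume h: "\<forall>k. 0 \<le> height (A @ B) k"
  show "0 \<le> height A k"
  proof (cases "k \<le> length A")
    case True then show ?thesis using h[rule_format, of k] by (auto simp: height_append)
  next
    case False then show ?thesis using h[rule_format, of "length A"] by (auto simp: height_append height_full)
  qed
qed auto
lemma bal_arch: "bal X \<Longrightarrow> bal (True # X @ [False])"
  unfolding bal_def
proof (intro conjI allI; (elim conjE)?)
  fix k assume h: "hgt X = 0" "\<forall>k. 0 \<le> height X k"
  show "0 \<le> height (True # X @ [False]) k"
  proof (cases "k = 0")
    case False
    then show ?thesis using h(1) h(2)[rule_format, of "k - 1"]
      by (cases "k - 1 \<le> length X") (auto simp: height_Cons height_append height_full)
  qed simp
qed auto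

lemma first_neg: "hgt Z < - d \<Longrightarrow> d \<ge> 0 \<Longrightarrow> \<exists>A B. Z = A @ False # B \<and> hgt A = - d \<and> (\<forall>k. height A k \<ge> - d)"
proof (induction Z arbitrary: d)
  case Nil then show ?case by simp
next
  case (Cons b Z)
  show ?case
  proof (cases b)
    case True
    then have "hgt Z < - (d+1)" using Cons by simp
    from Cons.IH[OF this] Cons.prems obtain A B where "Z = A @ False # B" "hgt A = -(d+1)" "\<forall>k. height A k \<ge> -(d+1)" by auto
    then show ?thesis using True Cons.prems
      apply (rule_tac exI[of _ "True # A"], rule_tac exI[of _ B]) apply (auto simp: height_Cons)
      by (smt (verit))
  next
    case False
    show ?thesis
    proof (cases "d = 0")
      case True then show ?thesis using \<open>\<not> b\<close> apply (rule_tac exI[of _ "[]"], rule_tac exI[of _ Z]) by (auto simp: height_hgt)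
    next
      case d: False
      then have "hgt Z < - (d-1)" "d - 1 \<ge> 0" using Cons False by auto
      from Cons.IH[OF this] obtain A B where "Z = A @ False # B" "hgt A = -(d-1)" "\<forall>k. height A k \<ge> -(d-1)" by auto
      then show ?thesis using False Cons.prems
        apply (rule_tac exI[of _ "False # A"], rule_tac exI[of _ B]) apply (auto simp: height_Cons)
      by (smt (verit))
    qed
  qed
qed

lemma bal_ConsD: "bal (b # P) \<Longrightarrow> b"
proof -
  assume "bal (b # P)"
  then have "height (b # P) 1 \<ge> 0" by (auto simp: bal_def)
  then show b by (cases b) (auto simp: height_Cons)
qed

lemma first_return: "bal P \<Longrightarrow> P \<noteq> [] \<Longrightarrow> \<exists>X R. P = True # X @ False # R \<and> bal X \<and> bal R"
proof -
  assume b: "bal P" "P \<noteq> []"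
  then obtain c P' where P: "P = c # P'" by (cases P) auto
  with b have c using bal_ConsD by auto
  with b P have "hgt P' < - 0" by (auto simp: bal_def)
  from first_neg[OF this] obtain X R where XR: "P' = X @ False # R" "hgt X = 0" "\<forall>k. height X k \<ge> 0" by auto
  then have bX: "bal X" by (auto simp: bal_def)
  have "P = (True # X @ [False]) @ R" using P XR \<open>c\<close> by simp
  with b bal_arch[OF bX] have "bal R" using bal_app_right by metis
  then show ?thesis using bX P XR \<open>c\<close> by auto
qed

lemma bal_no_early: "bal X' \<Longrightarrow> X' = X @ False # M \<Longrightarrow> hgt X = 0 \<Longrightarrow> False"
proof -
  assume a: "bal X'" "X' = X @ False # M" "hgt X = 0"
  then have "height X' (Suc (length X)) \<ge> 0" by (auto simp: bal_def)
  then show False using a by (auto simp: height_append height_Cons)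
qed

lemma first_return_unique:
  assumes "True # X @ False # R = True # X' @ False # R'" "bal X" "bal X'"
  shows "X = X' \<and> R = R'"
proof -
  have e: "X @ False # R = X' @ False # R'" using assms by simp
  then consider (a) M where "X' = X @ M" "M @ False # R' = False # R" | (b) M where "X = X' @ M" "M @ False # R = False # R'"
    by (auto simp: append_eq_append_conv2)
  then show ?thesis
  proof cases
    case a
    show ?thesis
    proof (cases M)
      case Nil then show ?thesis using a e by auto
    next
      case (Cons c M') then have "X' = X @ False # M'" using a by auto
      then show ?thesis using bal_no_early assms by (auto simp: bal_def)
    qed
  next
    case b
    show ?thesis
    proof (cases M)
      case Nil then show ?thesis using b e by auto
    next
      case (Cons c M') then have "X = X' @ False # M'" using b by auto
      then show ?thesis using bal_no_early assms by (auto simp: bal_def)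
    qed
  qed
qed


definition step' :: "bool list \<Rightarrow> bool list \<Rightarrow> bool" where
  "step' P Q \<longleftrightarrow> (\<exists>A e B. bal e \<and> P = A @ [False, True] @ e @ [False] @ B \<and> Q = A @ [True] @ e @ [False, False] @ B)"

lemma height_app_len: "height (A @ B) (length A + j) = hgt A + height B j"
  by (cases "j = 0") (auto simp: height_append height_full)

lemma step'_imp_tamari: "step' P Q \<Longrightarrow> tamari_step P Q"
proof -
  assume "step' P Q"
  then obtain A e B where e: "bal e" and P: "P = A @ [False, True] @ e @ [False] @ B"
    and Q: "Q = A @ [True] @ e @ [False, False] @ B" unfolding step'_def by blast
  have hP: "height P (length A + j) = hgt A + height (False # True # e @ False # B) j" for j
    using height_app_len[of A] P by simp
  have h1: "height P (length A + 1) = hgt A - 1" using hP[of 1] by (simp add: height_Cons)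
  have hm: "height P (length A + (length e + 3)) = hgt A - 1" using hP[of "length e + 3"] e
    by (simp add: height_Cons height_append height_full bal_def numeral_3_eq_3)
  have hmid: "height P k > height P (length A + 1)" if "length A + 1 < k" "k < length A + length e + 3" for k
  proof -
    define j where "j = k - length A"
    have k: "k = length A + j" "1 < j" "j < length e + 3" using that unfolding j_def by auto
    have "height P k = hgt A + height e (j - 2)" using hP[of j] k
      by (auto simp: height_Cons height_append numeral_2_eq_2)
    moreover have "height e (j - 2) \<ge> 0" using e by (auto simp: bal_def)
    ultimately show ?thesis using h1 by simp
  qed
  show ?thesis unfolding tamari_step_def
    apply (rule exI[of _ "length A"], rule exI[of _ "length A + length e + 3"])
    using h1 hm hmid P Q by (auto simp: nth_append numeral_3_eq_3)
qed

lemma tamari_imp_step': "tamari_step P Q \<Longrightarrow> step' P Q"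
proof -
  assume "tamari_step P Q"
  then obtain i m where c: "i + 1 < length P" "\<not> P ! i" "P ! (i + 1)" "i + 1 < m" "m \<le> length P"
     "height P m = height P (i + 1)"
     "\<forall>k. i + 1 < k \<and> k < m \<longrightarrow> height P k > height P (i + 1)"
     and Q: "Q = take i P @ take (m - (i + 1)) (drop (i + 1) P) @ [False] @ drop m P"
    unfolding tamari_step_def by blast
  define D where "D = drop (i+1) P"
  define L where "L = m - (i+1)"
  have hD: "height P (i + 1 + t) = height P (i+1) + height D t" for t
    unfolding D_def using height_drop[of "i+1" P t] c(1) by simp
  have D0: "D ! 0 = True" using c unfolding D_def by simp
  have lenD: "L \<le> length D" unfolding D_def L_def using c by simp
  have DL: "height D L = 0" using hD[of L] c unfolding L_def by simp
  have Dpos: "height D t > 0" if "0 < t" "t < L" for t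
    using hD[of t] c(7)[rule_format, of "i+1+t"] that unfolding L_def by simp
  have L1: "L \<ge> 1" unfolding L_def using c by simp
  have L2: "L \<ge> 2"
  proof (rule ccontr)
    assume "\<not> L \<ge> 2" then have "L = 1" using L1 by simp
    moreover have "D \<noteq> []" using lenD L1 by auto
    ultimately show False using DL D0 height_Suc[of 0 D] lenD by simp
  qed
  have stepL: "height D L = height D (L - 1) + stp (D ! (L - 1))"
    using height_Suc[of "L - 1" D] lenD L2 by simp
  have "height D (L - 1) > 0" using Dpos[of "L-1"] L2 by simp
  then have DL1: "D ! (L - 1) = False" "height D (L - 1) = 1" using stepL DL
    by (cases "D ! (L - 1)"; simp add: stp_def)+
  define e where "e = take (L - 2) (drop 1 D)"
  have Dne: "D = D ! 0 # drop 1 D" using lenD L2 by (cases D) auto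
  obtain L' where L': "L = Suc (Suc L')" using L2 by (metis add_2_eq_Suc le_Suc_ex)
  have eL: "e = take L' (drop 1 D)" unfolding e_def L' by simp
  have lenD1: "L' < length (drop 1 D)" using lenD L' by simp
  have tk: "take L D = True # e @ [False]"
  proof -
    have "take L D = D ! 0 # take (Suc L') (drop 1 D)" using Dne L'
      by (metis take_Suc_Cons)
    also have "take (Suc L') (drop 1 D) = e @ [drop 1 D ! L']"
      unfolding eL using lenD1 by (simp add: take_Suc_conv_app_nth)
    also have "drop 1 D ! L' = D ! (L - 1)" using L' lenD by simp
    finally show ?thesis using D0 DL1 by simp
  qed
  have he: "height e t = height D (Suc t) - 1" if "t \<le> L - 2" for t
  proof -
    have "height D (Suc t) = 1 + height (drop 1 D) t" using D0 height_Cons[of "D!0" "drop 1 D" "Suc t"] Dne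
      by simp
    moreover have "height (drop 1 D) t = height e t" unfolding eL height_hgt using that L' by simp
    ultimately show ?thesis by simp
  qed
  have be: "bal e"
    unfolding bal_def
  proof (intro conjI allI)
    have "length e = L - 2" unfolding e_def using lenD L2 by simp
    then have "hgt e = height e (L - 2)" by (simp add: height_full)
    then show "hgt e = 0" using he[of "L-2"] DL1 L2 by (simp add: Suc_diff_Suc numeral_2_eq_2)
    fix t
    show "0 \<le> height e t"
    proof (cases "t \<le> L - 2")
      case True then show ?thesis using he[OF True] Dpos[of "Suc t"] L2 by simp
    next
      case False then have "height e t = height e (L-2)" unfolding e_def height_hgt by (simp add: min_def)
      then show ?thesis using he[of "L-2"] DL1 L2 by (simp add: Suc_diff_Suc numeral_2_eq_2)
    qed
  qed
  have dL: "drop L D = drop m P" unfolding D_def L_def using c by simp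
  have Pi: "drop i P = False # D" unfolding D_def using c by (metis Cons_nth_drop_Suc Suc_eq_plus1 Suc_lessD)
  have P: "P = take i P @ [False, True] @ e @ [False] @ drop m P"
  proof -
    have "P = take i P @ drop i P" by simp
    also have "drop i P = False # (take L D @ drop L D)" using Pi by simp
    finally show ?thesis using tk dL by simp
  qed
  have Q': "Q = take i P @ [True] @ e @ [False, False] @ drop m P"
    using Q tk unfolding D_def L_def by simp
  show ?thesis unfolding step'_def using be P Q' by blast
qed

lemma tamari_step_iff: "tamari_step = step'"
  using step'_imp_tamari tamari_imp_step' by (intro ext) blast

lemma tamari_le_iff: "tamari_le = step'\<^sup>*\<^sup>*"
  unfolding tamari_le_def tamari_step_iff ..


abbreviation le' (infix "\<preceq>" 50) where "P \<preceq> Q \<equiv> step'\<^sup>*\<^sup>* P Q"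

lemma step'_ctx: "step' P Q \<Longrightarrow> step' (A @ P @ B) (A @ Q @ B)"
proof -
  assume "step' P Q"
  then obtain A0 e B0 where "bal e" "P = A0 @ [False, True] @ e @ [False] @ B0"
    "Q = A0 @ [True] @ e @ [False, False] @ B0" unfolding step'_def by blast
  then show ?thesis unfolding step'_def
    by (intro exI[of _ "A @ A0"] exI[of _ e] exI[of _ "B0 @ B"]) simp
qed

lemma le_ctx: "P \<preceq> Q \<Longrightarrow> (A @ P @ B) \<preceq> (A @ Q @ B)"
proof (induction rule: rtranclp_induct)
  case (step y z) then show ?case using step'_ctx by (metis rtranclp.rtrancl_into_rtrancl)
qed simp

lemma le_app: "P \<preceq> Q \<Longrightarrow> P' \<preceq> Q' \<Longrightarrow> (P @ P') \<preceq> (Q @ Q')"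
proof -
  assume a: "P \<preceq> Q" "P' \<preceq> Q'"
  have "(P @ P') \<preceq> (Q @ P')" using le_ctx[OF a(1), of "[]" P'] by simp
  moreover have "(Q @ P') \<preceq> (Q @ Q')" using le_ctx[OF a(2), of Q "[]"] by simp
  ultimately show ?thesis by simp
qed

lemma height_append_ge: "length A \<le> k \<Longrightarrow> height (A @ B) k = hgt A + height B (k - length A)"
  by (cases "k = length A") (auto simp: height_append height_full)

lemma height_ge_hgt_le: "bal P \<Longrightarrow> P = A @ False # C \<Longrightarrow> hgt A \<ge> 1"
proof -
  assume a: "bal P" "P = A @ False # C"
  then have "height P (length A + 1) \<ge> 0" by (auto simp: bal_def)
  then show ?thesis using a height_app_len[of A "False # C" 1] by (simp add: height_Cons)
qed

lemma step'_bal: "step' P Q \<Longrightarrow> bal P \<Longrightarrow> bal Q"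
proof -
  assume s: "step' P Q" and bP: "bal P"
  then obtain A e B where e: "bal e" and P: "P = A @ [False, True] @ e @ [False] @ B"
    and Q: "Q = A @ [True] @ e @ [False, False] @ B" unfolding step'_def by blast
  have hA: "hgt A \<ge> 1" using height_ge_hgt_le[OF bP] P by simp
  have hB: "hgt B = 1 - hgt A" using bP P e by (simp add: bal_def)
  have P2: "P = (A @ [False, True] @ e @ [False]) @ B" and Q2: "Q = (A @ [True] @ e @ [False, False]) @ B"
    using P Q by simp_all
  show ?thesis unfolding bal_def
  proof (intro conjI allI)
    show "hgt Q = 0" using Q hB e by (simp add: bal_def)
    fix k
    show "0 \<le> height Q k"
    proof (cases "k \<le> length A")
      case True
      then have "height Q k = height P k" using P Q by (simp add: height_append)
      then show ?thesis using bP by (simp add: bal_def)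
    next
      case False
      define j where "j = k - length A"
      have k: "k = length A + j" "j > 0" using False unfolding j_def by auto
      show ?thesis
      proof (cases "j \<le> length e + 2")
        case True
        have hq: "height Q k = hgt A + height (True # e @ [False, False] @ B) j" using k Q height_app_len[of A] by simp
        show ?thesis
        proof (cases "j - 1 \<le> length e")
          case True
          then have "height Q k = hgt A + 1 + height e (j - 1)" using hq k by (simp add: height_Cons height_append)
          then show ?thesis using hA e by (simp add: bal_def)
        next
          case False
          then have "j - 1 = length e + 1" using \<open>j \<le> length e + 2\<close> by simp
          then have "height Q k = hgt A" using hq k e by (simp add: height_Cons height_append bal_def height_full)
          then show ?thesis using hA by simp
        qed
      next
        case False
        then have "k \<ge> length (A @ [True] @ e @ [False, False])" using k by simp
        have "height Q k = hgt (A @ [True] @ e @ [False, False]) + height B (k - length (A @ [True] @ e @ [False, False]))"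
          unfolding Q2 by (rule height_append_ge) fact
        moreover have "height P k = hgt (A @ [False, True] @ e @ [False]) + height B (k - length (A @ [False, True] @ e @ [False]))"
          unfolding P2 by (rule height_append_ge) (use \<open>k \<ge> _\<close> in simp)
        ultimately have "height Q k = height P k" by simp
        then show ?thesis using bP by (simp add: bal_def)
      qed
    qed
  qed
qed

lemma le_bal: "P \<preceq> Q \<Longrightarrow> bal P \<Longrightarrow> bal Q"
  by (induction rule: rtranclp_induct) (auto intro: step'_bal)

lemma step'_len: "step' P Q \<Longrightarrow> length Q = length P \<and> length (filter id Q) = length (filter id P)"
  unfolding step'_def by auto

lemma le_len: "P \<preceq> Q \<Longrightarrow> length Q = length P \<and> length (filter id Q) = length (filter id P)"
proof (induction rule: rtranclp_induct)
  case (step y z) then show ?case using step'_len[of y z] by (simp add: id_def)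
qed simp

lemma move_down: "bal Y \<Longrightarrow> (A @ False # Y @ R) \<preceq> (A @ Y @ False # R)"
proof (induction "length Y" arbitrary: A Y rule: less_induct)
  case less
  show ?case
  proof (cases "Y = []")
    case False
    then obtain e Y' where Y: "Y = True # e @ False # Y'" "bal e" "bal Y'" using first_return less.prems by blast
    have "step' (A @ False # Y @ R) ((A @ True # e @ [False]) @ False # Y' @ R)"
      unfolding step'_def using Y by auto
    moreover have "((A @ True # e @ [False]) @ False # Y' @ R) \<preceq> ((A @ True # e @ [False]) @ Y' @ False # R)"
      using less.hyps[of Y' "A @ True # e @ [False]"] Y by simp
    ultimately show ?thesis using Y by (simp add: converse_rtranclp_into_rtranclp)
  qed simp
qed

lemma cut_list: "L @ R = A @ M @ B \<Longrightarrow>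
  (\<exists>A2. A = L @ A2 \<and> R = A2 @ M @ B) \<or> (\<exists>B1. B = B1 @ R \<and> L = A @ M @ B1) \<or>
  (\<exists>D D'. L = A @ D \<and> M = D @ D' \<and> D \<noteq> [] \<and> D' \<noteq> [] \<and> R = D' @ B)"
proof -
  assume h: "L @ R = A @ M @ B"
  then consider (1) A2 where "A = L @ A2" "R = A2 @ M @ B" | (2) U where "L = A @ U" "U @ R = M @ B"
    by (auto simp: append_eq_append_conv2)
  then show ?thesis
  proof cases
    case 2
    then consider (21) B1 where "U = M @ B1" "B = B1 @ R" | (22) D' where "M = U @ D'" "R = D' @ B"
      by (auto simp: append_eq_append_conv2)
    then show ?thesis
    proof cases
      case 22
      show ?thesis
      proof (cases "U = []")
        case True then show ?thesis using 2 22 by auto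
      next
        case False
        show ?thesis
        proof (cases "D' = []")
          case True then show ?thesis using 2 22 by auto
        next
          case f: False then show ?thesis using 2 22 False by blast
        qed
      qed
    qed (use 2 in auto)
  qed auto
qed

lemma prefix_bal_hgt: "D2 @ D' = e @ [c] \<Longrightarrow> D' \<noteq> [] \<Longrightarrow> bal e \<Longrightarrow> hgt D2 \<ge> 0"
proof -
  assume a: "D2 @ D' = e @ [c]" "D' \<noteq> []" "bal e"
  have "length D2 + length D' = length e + 1" using arg_cong[OF a(1), of length] by simp
  then have l: "length D2 \<le> length e" using a(2) by (cases D') auto
  have "D2 = take (length D2) (D2 @ D')" by simp
  also have "\<dots> = take (length D2) e" using a l by simp
  finally have "hgt D2 = height e (length D2)" by (simp add: height_hgt)
  then show ?thesis using a by (simp add: bal_def)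
qed

lemma prefix_FT: "D @ D' = [False, True] @ e @ [False] \<Longrightarrow> D \<noteq> [] \<Longrightarrow> D' \<noteq> [] \<Longrightarrow> bal e \<Longrightarrow>
   D = [False] \<or> hgt D \<ge> 0"
proof -
  assume a: "D @ D' = [False, True] @ e @ [False]" "D \<noteq> []" "D' \<noteq> []" "bal e"
  then obtain D1 where D1: "D = False # D1" "D1 @ D' = True # e @ [False]" by (cases D) auto
  show ?thesis
  proof (cases D1)
    case (Cons c D2)
    then have "c = True" "D2 @ D' = e @ [False]" using D1 by auto
    then show ?thesis using prefix_bal_hgt[of D2 D' e False] a D1 Cons by simp
  qed (use D1 in simp)
qed

lemma prefix_TFF: "D @ D' = [True] @ e @ [False, False] \<Longrightarrow> D \<noteq> [] \<Longrightarrow> D' \<noteq> [] \<Longrightarrow> bal e \<Longrightarrow> hgt D \<ge> 0"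
proof -
  assume a: "D @ D' = [True] @ e @ [False, False]" "D \<noteq> []" "D' \<noteq> []" "bal e"
  then obtain D1 where D1: "D = True # D1" "D1 @ D' = (e @ [False]) @ [False]" by (cases D) auto
  have "bal (e @ [False]) \<or> True" by simp
  show ?thesis
  proof (cases "length D1 \<le> length e")
    case True
    have "D1 = take (length D1) (D1 @ D')" by simp
    also have "\<dots> = take (length D1) e" using D1 True by simp
    finally have "hgt D1 = height e (length D1)" by (simp add: height_hgt)
    then show ?thesis using a D1 by (simp add: bal_def)
  next
    case False
    have "length D1 + length D' = length e + 2" using arg_cong[OF D1(2), of length] by simp
    then have l: "length D1 = length e + 1" using a(3) False by (cases D') auto
    have "D1 = take (length D1) (D1 @ D')" by simp
    also have "\<dots> = e @ [False]" using D1 l by simp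
    finally show ?thesis using D1 a by (simp add: bal_def)
  qed
qed


lemma split_le:
  assumes "P \<preceq> Q" "bal P"
  shows "Q = Q1 @ Q2 \<Longrightarrow> bal Q1 \<Longrightarrow> bal Q2 \<Longrightarrow>
    \<exists>P1 P2. P = P1 @ P2 \<and> length P1 = length Q1 \<and> bal P1 \<and> bal P2 \<and> P1 \<preceq> Q1 \<and> P2 \<preceq> Q2"
  using assms(1)
proof (induction arbitrary: Q1 Q2 rule: rtranclp_induct)
  case base
  then show ?case using assms by auto
next
  case (step Q Q')
  have bQ: "bal Q" using le_bal step.hyps(1) assms(2) by blast
  obtain A e B where e: "bal e" and Q: "Q = A @ [False, True] @ e @ [False] @ B"
    and Q': "Q' = A @ [True] @ e @ [False, False] @ B" using step.hyps(2) unfolding step'_def by blast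
  have hA: "hgt A \<ge> 1" using height_ge_hgt_le[OF bQ] Q by simp
  have cl: "Q1 @ Q2 = A @ ([True] @ e @ [False, False]) @ B" using step.prems(1) Q' by simp
  from cut_list[OF cl]
  consider (a) A2 where "A = Q1 @ A2" "Q2 = A2 @ ([True] @ e @ [False, False]) @ B"
    | (b) B1 where "B = B1 @ Q2" "Q1 = A @ ([True] @ e @ [False, False]) @ B1"
    | (c) D D' where "Q1 = A @ D" "[True] @ e @ [False, False] = D @ D'" "D \<noteq> []" "D' \<noteq> []"
    by blast
  then show ?case
  proof cases
    case a
    define R where "R = A2 @ [False, True] @ e @ [False] @ B"
    have QR: "Q = Q1 @ R" unfolding R_def using Q a by simp
    have bR: "bal R" using bal_app_right QR bQ step.prems by blast
    from step.IH[OF QR step.prems(2) bR] obtain P1 P2 where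
      P: "P = P1 @ P2" "length P1 = length Q1" "bal P1" "bal P2" "P1 \<preceq> Q1" "P2 \<preceq> R" by blast
    have "step' R Q2" unfolding step'_def R_def using a e by auto
    then have "P2 \<preceq> Q2" using P(6) by (meson rtranclp.rtrancl_into_rtrancl)
    then show ?thesis using P by blast
  next
    case b
    define L where "L = A @ [False, True] @ e @ [False] @ B1"
    have QL: "Q = L @ Q2" unfolding L_def using Q b by simp
    have "hgt L = hgt Q1" unfolding L_def using b by simp
    then have bL: "bal L" using bal_app_left QL bQ step.prems by (metis bal_def)
    from step.IH[OF QL bL step.prems(3)] obtain P1 P2 where
      P: "P = P1 @ P2" "length P1 = length L" "bal P1" "bal P2" "P1 \<preceq> L" "P2 \<preceq> Q2" by blast
    have "step' L Q1" unfolding step'_def L_def using b e by auto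
    moreover have "length L = length Q1" unfolding L_def using b by simp
    ultimately have "P1 \<preceq> Q1" "length P1 = length Q1" using P by (auto intro: rtranclp.rtrancl_into_rtrancl)
    then show ?thesis using P by blast
  next
    case c
    have "hgt D \<ge> 0" using prefix_TFF[OF c(2)[symmetric] c(3,4) e] .
    moreover have "hgt Q1 = 0" using step.prems by (simp add: bal_def)
    ultimately show ?thesis using c hA by simp
  qed
qed

lemma arch_step:
  assumes s: "step' (True # Q1 @ False # Q2) Q'" and bq: "bal Q1" "bal Q2"
  shows "(\<exists>Q1'. step' Q1 Q1' \<and> Q' = True # Q1' @ False # Q2)
    \<or> (\<exists>e B. bal e \<and> Q2 = True # e @ False # B \<and> Q' = True # (Q1 @ True # e @ [False]) @ False # B)
    \<or> (\<exists>Q2'. step' Q2 Q2' \<and> Q' = True # Q1 @ False # Q2')"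
proof -
  define Q where "Q = True # Q1 @ False # Q2"
  have bQ: "bal Q" unfolding Q_def using bal_app[OF bal_arch[OF bq(1)] bq(2)] by simp
  obtain A e B where e: "bal e" and Q: "Q = A @ [False, True] @ e @ [False] @ B"
    and Q': "Q' = A @ [True] @ e @ [False, False] @ B" using s unfolding step'_def Q_def by blast
  have hA: "hgt A \<ge> 1" using height_ge_hgt_le[OF bQ] Q by simp
  then have Ane: "A \<noteq> []" by auto
  have QLR: "(True # Q1 @ [False]) @ Q2 = A @ ([False, True] @ e @ [False]) @ B" using Q unfolding Q_def by simp
  from cut_list[OF QLR]
  consider (a) A2 where "A = (True # Q1 @ [False]) @ A2" "Q2 = A2 @ ([False, True] @ e @ [False]) @ B"
    | (b) B1 where "B = B1 @ Q2" "True # Q1 @ [False] = A @ ([False, True] @ e @ [False]) @ B1"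
    | (c) D D' where "True # Q1 @ [False] = A @ D" "[False, True] @ e @ [False] = D @ D'" "D \<noteq> []" "D' \<noteq> []" "Q2 = D' @ B"
    by blast
  then show ?thesis
  proof cases
    case a
    have "step' Q2 (A2 @ [True] @ e @ [False, False] @ B)" unfolding step'_def using a e by auto
    then show ?thesis using a Q' by auto
  next
    case b
    obtain A' where A': "A = True # A'" using Ane b(2) by (cases A) auto
    show ?thesis
    proof (cases B1 rule: rev_cases)
      case Nil
      then have "Q1 = A' @ False # (True # e)" using b A' by simp
      moreover have "hgt Q1 = hgt A'" using \<open>Q1 = _\<close> e by (simp add: bal_def)
      ultimately have False using bal_no_early[OF bq(1), of A' "True # e"] bq(1) by (simp add: bal_def)
      then show ?thesis ..
    next
      case (snoc B1' c)
      then have Q1: "Q1 = A' @ [False, True] @ e @ [False] @ B1'" and "c = False" using b A' by auto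
      have "step' Q1 (A' @ [True] @ e @ [False, False] @ B1')" unfolding step'_def using Q1 e by blast
      then show ?thesis using Q' A' b snoc \<open>c = False\<close> by auto
    qed
  next
    case c
    have hD: "D = [False] \<or> hgt D \<ge> 0" using prefix_FT[OF c(2)[symmetric] c(3,4) e] .
    have "hgt (A @ D) = 0" using c(1)[symmetric] bq by (simp add: bal_def)
    then have D: "D = [False]" "hgt A = 1" using hD hA by auto
    obtain A' where A': "A = True # A'" using Ane c(1) by (cases A) auto
    then have "Q1 = A'" using c(1) D by simp
    moreover have "D' = True # e @ [False]" using c(2) D by simp
    ultimately show ?thesis using c Q' A' e by auto
  qed
qed

lemma decomp_le:
  assumes "P \<preceq> Q" "P = True # X @ False # P'" "bal X" "bal P'"
  shows "\<exists>Y P2 Q1 Q2. P' = Y @ P2 \<and> bal Y \<and> bal P2 \<and> bal Q1 \<and> bal Q2 \<and> Q = True # Q1 @ False # Q2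
     \<and> (X @ Y) \<preceq> Q1 \<and> P2 \<preceq> Q2"
  using assms(1)
proof (induction rule: rtranclp_induct)
  case base
  show ?case apply (rule exI[of _ "[]"], rule exI[of _ P'], rule exI[of _ X]) using assms by auto
next
  case (step Q Q')
  then obtain Y P2 Q1 Q2 where IH: "P' = Y @ P2" "bal Y" "bal P2" "bal Q1" "bal Q2" "Q = True # Q1 @ False # Q2"
     "(X @ Y) \<preceq> Q1" "P2 \<preceq> Q2" by blast
  from arch_step[of Q1 Q2 Q'] step.hyps(2) IH
  consider (1) Q1' where "step' Q1 Q1'" "Q' = True # Q1' @ False # Q2"
    | (2) e B where "bal e" "Q2 = True # e @ False # B" "Q' = True # (Q1 @ True # e @ [False]) @ False # B"
    | (3) Q2' where "step' Q2 Q2'" "Q' = True # Q1 @ False # Q2'" by blast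
  then show ?case
  proof cases
    case 1
    show ?thesis
      apply (rule exI[of _ Y], rule exI[of _ P2], rule exI[of _ Q1'], rule exI[of _ Q2]) using 1 IH step'_bal by (auto intro: rtranclp.rtrancl_into_rtrancl)
  next
    case 3
    show ?thesis
      apply (rule exI[of _ Y], rule exI[of _ P2], rule exI[of _ Q1], rule exI[of _ Q2']) using 3 IH step'_bal by (auto intro: rtranclp.rtrancl_into_rtrancl)
  next
    case 2
    have ba: "bal (True # e @ [False])" using bal_arch[OF 2(1)] .
    have Q2s: "Q2 = (True # e @ [False]) @ B" using 2 by simp
    have bB: "bal B" using bal_app_right IH(5) Q2s ba by metis
    from split_le[OF IH(8) IH(3) Q2s ba bB] obtain Z W where
      ZW: "P2 = Z @ W" "bal Z" "bal W" "Z \<preceq> True # e @ [False]" "W \<preceq> B" by blast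
    have "(X @ Y @ Z) \<preceq> (Q1 @ True # e @ [False])" using le_app[OF IH(7) ZW(4)] by simp
    moreover have "bal (Q1 @ True # e @ [False])" using bal_app[OF IH(4) ba] .
    ultimately have xx: "(X @ Y @ Z) \<preceq> (Q1 @ True # e @ [False])" "bal (Q1 @ True # e @ [False])" .
    show ?thesis
      apply (rule exI[of _ "Y @ Z"], rule exI[of _ W], rule exI[of _ "Q1 @ True # e @ [False]"], rule exI[of _ B])
      using xx IH ZW 2 bal_app[OF IH(2) ZW(2)] bB by auto
  qed
qed

lemma compose_le:
  assumes "bal Y" "(X @ Y) \<preceq> Q1" "P2 \<preceq> Q2"
  shows "(True # X @ False # Y @ P2) \<preceq> (True # Q1 @ False # Q2)"
proof -
  have 1: "(True # X @ False # Y @ P2) \<preceq> (True # X @ Y @ False # P2)"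
    using move_down[OF assms(1), of "True # X" P2] by simp
  have 2: "(True # X @ Y @ False # P2) \<preceq> (True # Q1 @ False # P2)"
    using le_ctx[OF assms(2), of "[True]" "False # P2"] by simp
  have 3: "(True # Q1 @ False # P2) \<preceq> (True # Q1 @ False # Q2)"
    using le_ctx[OF assms(3), of "True # Q1 @ [False]" "[]"] by simp
  show ?thesis using 1 2 3 by simp
qed


lemma hgt_count: "hgt P = 2 * int (length (filter id P)) - int (length P)"
  by (induction P) (auto simp: stp_def)

lemma dyck_iff: "dyck n P \<longleftrightarrow> bal P \<and> length P = 2 * n"
proof
  assume d: "dyck n P"
  then have h: "hgt P = 0" using hgt_count[of P] by (simp add: dyck_def)
  have "\<forall>k. height P k \<ge> 0"
  proof
    fix k show "height P k \<ge> 0"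
    proof (cases "k \<le> length P")
      case True then show ?thesis using d by (simp add: dyck_def)
    next
      case False then show ?thesis using h by (simp add: height_full)
    qed
  qed
  then show "bal P \<and> length P = 2 * n" using d h by (simp add: dyck_def bal_def)
next
  assume "bal P \<and> length P = 2 * n"
  then show "dyck n P" using hgt_count[of P] by (auto simp: dyck_def bal_def)
qed

lemma bal_even: "bal P \<Longrightarrow> length P = 2 * length (filter id P)"
  using hgt_count[of P] by (simp add: bal_def)

lemma intervals_iff: "(P, Q) \<in> intervals n \<longleftrightarrow> bal P \<and> bal Q \<and> length P = 2 * n \<and> P \<preceq> Q"
  unfolding intervals_def tamari_le_iff dyck_iff using le_len le_bal by auto

lemma finite_intervals: "finite (intervals n)"
proof -
  have "intervals n \<subseteq> {xs. set xs \<subseteq> UNIV \<and> length xs = 2 * n} \<times> {xs. set xs \<subseteq> UNIV \<and> length xs = 2 * n}"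
    unfolding intervals_def dyck_def by auto
  moreover have "finite ({xs. set xs \<subseteq> (UNIV::bool set) \<and> length xs = 2 * n} \<times> {xs. set xs \<subseteq> (UNIV::bool set) \<and> length xs = 2 * n})"
    by (intro finite_cartesian_product finite_lists_length_eq) (simp_all add: UNIV_bool)
  ultimately show ?thesis by (rule finite_subset)
qed

lemma finite_contacts: "finite (contacts P)"
  unfolding contacts_def by auto

lemma contact_split: "bal P1 \<Longrightarrow> k \<in> contacts P1 \<Longrightarrow> bal (take k P1) \<and> bal (drop k P1)"
proof -
  assume a: "bal P1" "k \<in> contacts P1"
  then have "hgt (take k P1) = 0" by (simp add: contacts_def height_hgt)
  then have "bal (take k P1)" using bal_app_left[of "take k P1" "drop k P1"] a by simp
  then show ?thesis using bal_app_right[of "take k P1" "drop k P1"] a by simp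
qed

definition build :: "bool list \<times> bool list \<Rightarrow> nat \<Rightarrow> bool list \<times> bool list \<Rightarrow> bool list \<times> bool list" where
  "build pq1 k pq2 = (True # take k (fst pq1) @ False # drop k (fst pq1) @ fst pq2, True # snd pq1 @ False # snd pq2)"

definition gdom :: "nat \<Rightarrow> (nat \<times> (bool list \<times> bool list) \<times> (bool list \<times> bool list) \<times> nat) set" where
  "gdom n = (SIGMA n1:{..n}. SIGMA pq1:intervals n1. SIGMA pq2:intervals (n - n1). contacts (fst pq1))"

definition gmap where "gmap t = (case t of (n1, pq1, pq2, k) \<Rightarrow> build pq1 k pq2)"

lemma gmap_bij: "bij_betw gmap (gdom n) (intervals (Suc n))"
proof (rule bij_betwI')
  fix t t' assume tt: "t \<in> gdom n" "t' \<in> gdom n"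
  obtain n1 P1 Q1 P2 Q2 k where t: "t = (n1, (P1, Q1), (P2, Q2), k)" by (cases t) auto
  obtain n1' P1' Q1' P2' Q2' k' where t': "t' = (n1', (P1', Q1'), (P2', Q2'), k')" by (cases t') auto
  have m: "(P1, Q1) \<in> intervals n1" "(P2, Q2) \<in> intervals (n - n1)" "k \<in> contacts P1"
    "(P1', Q1') \<in> intervals n1'" "(P2', Q2') \<in> intervals (n - n1')" "k' \<in> contacts P1'"
    using tt t t' unfolding gdom_def by auto
  have b: "bal P1" "bal Q1" "bal P1'" "bal Q1'" "length P1 = 2 * n1" "length P1' = 2 * n1'"
    "P1 \<preceq> Q1" "P1' \<preceq> Q1'" using m intervals_iff by blast+
  have l: "length Q1 = 2 * n1" "length Q1' = 2 * n1'" using b le_len by metis+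
  have cs: "bal (take k P1)" "bal (drop k P1)" "bal (take k' P1')" "bal (drop k' P1')"
    using contact_split m b by blast+
  have kk: "k \<le> length P1" "k' \<le> length P1'" using m by (auto simp: contacts_def)
  show "(gmap t = gmap t') = (t = t')"
  proof
    assume eq: "gmap t = gmap t'"
    then have Q: "True # Q1 @ False # Q2 = True # Q1' @ False # Q2'" using t t' by (simp add: gmap_def build_def)
    then have Q12: "Q1 = Q1'" "Q2 = Q2'" using first_return_unique b by blast+
    then have n1: "n1 = n1'" using l by simp
    have "True # take k P1 @ False # (drop k P1 @ P2) = True # take k' P1' @ False # (drop k' P1' @ P2')"
      using eq t t' by (simp add: gmap_def build_def)
    then have X: "take k P1 = take k' P1'" "drop k P1 @ P2 = drop k' P1' @ P2'"
      using first_return_unique cs by blast+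
    then have k: "k = k'" using kk by (metis length_take min_absorb2)
    have "length (drop k P1) = length (drop k' P1')" using k n1 b by simp
    then have "drop k P1 = drop k' P1'" "P2 = P2'" using X(2) by simp_all
    then have "P1 = P1'" using X(1) by (metis append_take_drop_id)
    then show "t = t'" using t t' n1 k Q12 \<open>P2 = P2'\<close> by simp
  qed simp
next
  fix t assume "t \<in> gdom n"
  then obtain n1 P1 Q1 P2 Q2 k where t: "t = (n1, (P1, Q1), (P2, Q2), k)"
    and m: "n1 \<le> n" "(P1, Q1) \<in> intervals n1" "(P2, Q2) \<in> intervals (n - n1)" "k \<in> contacts P1"
    unfolding gdom_def by (cases t) auto
  have b: "bal P1" "bal Q1" "length P1 = 2 * n1" "P1 \<preceq> Q1" "bal P2" "bal Q2" "length P2 = 2 * (n - n1)" "P2 \<preceq> Q2"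
    using m intervals_iff by blast+
  have cs: "bal (take k P1)" "bal (drop k P1)" using contact_split m b by blast+
  have "(True # take k P1 @ False # drop k P1 @ P2) \<preceq> (True # Q1 @ False # Q2)"
    using compose_le[OF cs(2)] b by simp
  moreover have "bal (True # take k P1 @ False # drop k P1 @ P2)"
    using bal_app[OF bal_arch[OF cs(1)] bal_app[OF cs(2) b(5)]] by simp
  moreover have "bal (True # Q1 @ False # Q2)"
    using bal_app[OF bal_arch[OF b(2)] b(6)] by simp
  moreover have "k \<le> length P1" using m by (simp add: contacts_def)
  then have "length (True # take k P1 @ False # drop k P1 @ P2) = 2 * Suc n" using b m by simp
  ultimately have "(True # take k P1 @ False # drop k P1 @ P2, True # Q1 @ False # Q2) \<in> intervals (Suc n)"
    using intervals_iff by blast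
  then show "gmap t \<in> intervals (Suc n)" unfolding t gmap_def build_def by simp
next
  fix pq assume pq: "pq \<in> intervals (Suc n)"
  obtain P Q where PQ: "pq = (P, Q)" by (cases pq) auto
  have b: "bal P" "bal Q" "length P = 2 * Suc n" "P \<preceq> Q" using pq PQ intervals_iff by blast+
  then obtain X P' where XP: "P = True # X @ False # P'" "bal X" "bal P'" using first_return by fastforce
  from decomp_le[OF b(4) XP] obtain Y P2 Q1 Q2 where
    d: "P' = Y @ P2" "bal Y" "bal P2" "bal Q1" "bal Q2" "Q = True # Q1 @ False # Q2" "(X @ Y) \<preceq> Q1" "P2 \<preceq> Q2"
    by blast
  define n1 where "n1 = length Q1 div 2"
  have lQ1: "length Q1 = 2 * n1" unfolding n1_def using bal_even[OF d(4)] by simp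
  have lP1: "length (X @ Y) = 2 * n1" using le_len[OF d(7)] lQ1 by simp
  have n1n: "n1 \<le> n" using b(3) XP d lP1 by simp
  have lP2: "length P2 = 2 * (n - n1)" using b(3) XP d lP1 by simp
  have i1: "(X @ Y, Q1) \<in> intervals n1" using intervals_iff lP1 d bal_app XP by blast
  have i2: "(P2, Q2) \<in> intervals (n - n1)" using intervals_iff lP2 d by blast
  have k: "length X \<in> contacts (X @ Y)" using XP(2) by (simp add: contacts_def height_append bal_def height_full)
  have "(n1, (X @ Y, Q1), (P2, Q2), length X) \<in> gdom n" unfolding gdom_def using n1n i1 i2 k by auto
  moreover have "pq = gmap (n1, (X @ Y, Q1), (P2, Q2), length X)" using PQ XP d by (simp add: gmap_def build_def)
  ultimately show "\<exists>t\<in>gdom n. pq = gmap t" by blast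
qed

lemma sum_Sigma': "finite A \<Longrightarrow> (\<forall>x\<in>A. finite (B x)) \<Longrightarrow> sum g (Sigma A B) = (\<Sum>x\<in>A. \<Sum>y\<in>B x. g (x, y))"
  by (subst sum.Sigma) auto

lemma sum_intervals_Suc:
  "sum f (intervals (Suc n)) = (\<Sum>n1\<le>n. \<Sum>pq1\<in>intervals n1. \<Sum>pq2\<in>intervals (n - n1). \<Sum>k\<in>contacts (fst pq1). f (build pq1 k pq2))"
proof -
  have "sum f (intervals (Suc n)) = sum (\<lambda>t. f (gmap t)) (gdom n)"
    using sum.reindex_bij_betw[OF gmap_bij, of f n] by simp
  also have "\<dots> = (\<Sum>n1\<le>n. \<Sum>pq1\<in>intervals n1. \<Sum>pq2\<in>intervals (n - n1). \<Sum>k\<in>contacts (fst pq1). f (gmap (n1, pq1, pq2, k)))"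
    unfolding gdom_def
    by (simp add: sum_Sigma' finite_intervals finite_contacts finite_SigmaI)
  finally show ?thesis by (simp add: gmap_def)
qed


definition ups :: "bool list \<Rightarrow> nat list" where "ups P = filter (\<lambda>i. P ! i) [0..<length P]"
definition cl :: "bool list \<Rightarrow> nat list" where "cl P = filter (\<lambda>k. height P k = 0) [0..<Suc (length P)]"

lemma upstart_ups: "upstart P j = ups P ! (j - 1)" by (simp add: upstart_def ups_def)

lemma upt_Suc_map: "[0..<Suc n] = 0 # map Suc [0..<n]"
  by (simp add: map_Suc_upt upt_conv_Cons del: upt_Suc)

lemma map_add_upt1: "map (\<lambda>k. k + a) [1..<Suc m] = [Suc a..<Suc a + m]"
  by (induction m) auto

lemma ups_Nil[simp]: "ups [] = []" by (simp add: ups_def)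
lemma ups_Cons: "ups (b # A) = (if b then 0 # map Suc (ups A) else map Suc (ups A))"
proof -
  have "ups (b # A) = filter (\<lambda>i. (b # A) ! i) (0 # map Suc [0..<length A])"
    unfolding ups_def by (simp only: length_Cons upt_Suc_map)
  also have "\<dots> = (if b then 0 # map Suc (ups A) else map Suc (ups A))"
    by (simp add: filter_map o_def ups_def)
  finally show ?thesis .
qed

lemma ups_append: "ups (A @ B) = ups A @ map (\<lambda>i. i + length A) (ups B)"
  by (induction A) (auto simp: ups_Cons o_def)

lemma length_ups: "length (ups A) = length (filter id A)"
  by (induction A) (auto simp: ups_Cons)

lemma ups_lt: "i \<in> set (ups A) \<Longrightarrow> i < length A"
  by (auto simp: ups_def)

lemma contacts_cl: "contacts P = set (cl P)"
  by (auto simp: contacts_def cl_def less_Suc_eq_le simp del: upt_Suc)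

lemma distinct_cl: "distinct (cl P)" by (simp add: cl_def)

lemma card_filter_cl: "card {c \<in> contacts P. p c} = length (filter p (cl P))"
proof -
  have "{c \<in> contacts P. p c} = set (filter p (cl P))" by (auto simp: contacts_cl)
  then show ?thesis using distinct_card[of "filter p (cl P)"] distinct_cl by simp
qed

lemma contact_cl: "contact P = length (cl P)"
  unfolding contact_def contacts_cl using distinct_card distinct_cl by blast
lemma contact_le_cl: "contact_le P j = length (filter (\<lambda>k. k \<le> upstart P j) (cl P))"
  unfolding contact_le_def using card_filter_cl[of P "\<lambda>k. k \<le> upstart P j"] by simp
lemma contact_gt_cl: "contact_gt P j = length (filter (\<lambda>k. k > upstart P j) (cl P))"
  unfolding contact_gt_def using card_filter_cl[of P "\<lambda>k. k > upstart P j"] by simp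

lemma cl_Cons0: "cl B = 0 # tl (cl B)" "tl (cl B) = filter (\<lambda>k. height B k = 0) [1..<Suc (length B)]"
  by (simp_all add: cl_def upt_conv_Cons del: upt_Suc)

lemma cl_append: "hgt A = 0 \<Longrightarrow> cl (A @ B) = cl A @ map (\<lambda>k. k + length A) (tl (cl B))"
proof -
  assume h: "hgt A = 0"
  have u: "[0..<Suc (length (A @ B))] = [0..<Suc (length A)] @ map (\<lambda>k. k + length A) [1..<Suc (length B)]"
  proof -
    have "[0..<Suc (length A) + length B] = [0..<Suc (length A)] @ [Suc (length A)..<Suc (length A) + length B]"
      by (rule upt_add_eq_append) simp
    moreover have "map (\<lambda>k. k + length A) [1..<Suc (length B)] = [Suc (length A)..<Suc (length A) + length B]"
      by (rule map_add_upt1)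
    ultimately show ?thesis by simp
  qed
  have f1: "filter (\<lambda>k. height (A @ B) k = 0) [0..<Suc (length A)] = cl A"
    unfolding cl_def by (rule filter_cong) (auto simp: height_append)
  have f2: "filter (\<lambda>k. height (A @ B) k = 0) (map (\<lambda>k. k + length A) [1..<Suc (length B)])
     = map (\<lambda>k. k + length A) (tl (cl B))"
    unfolding cl_Cons0(2) filter_map o_def using h
    by (intro arg_cong[where f = "map _"] filter_cong) (auto simp: height_append add.commute)
  show ?thesis unfolding cl_def[of "A @ B"] u filter_append f1 f2 ..
qed

lemma cl_last: "hgt X = 0 \<Longrightarrow> \<exists>pre. cl X = pre @ [length X] \<and> (\<forall>c\<in>set pre. c < length X)"
proof -
  assume h: "hgt X = 0"
  have "cl X = filter (\<lambda>k. height X k = 0) [0..<length X] @ [length X]"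
    unfolding cl_def using h by (simp add: height_full)
  then show ?thesis by fastforce
qed

lemma cl_arch: "bal X \<Longrightarrow> cl (True # X @ [False]) = [0, length X + 2]"
proof -
  assume b: "bal X"
  have u1: "[0..<Suc (length X + 2)] = [0..<length X + 2] @ [length X + 2]" by (simp del: upt_Suc add: upt_Suc_append)
  have u2: "[0..<length X + 2] = 0 # [Suc 0..<length X + 2]" by (rule upt_conv_Cons) simp
  have u: "[0..<Suc (length (True # X @ [False]))] = [0] @ [Suc 0..<length X + 2] @ [length X + 2]"
    using u1 u2 by simp
  have pos: "height (True # X @ [False]) k \<noteq> 0" if "k \<in> set [Suc 0..<length X + 2]" for k
  proof -
    have "k \<ge> 1" "k - 1 \<le> length X" using that by auto
    then have "height (True # X @ [False]) k = 1 + height X (k - 1)"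
      by (auto simp: height_Cons height_append)
    then show ?thesis using b by (simp add: bal_def) (smt (verit) b bal_def)
  qed
  have e: "height (True # X @ [False]) (length X + 2) = 0" using b
    by (simp add: height_full bal_def)
  show ?thesis unfolding cl_def u using pos e by (simp add: filter_empty_conv)
qed

lemma cl_nonempty: "cl B \<noteq> []" using cl_Cons0(1) by (metis list.distinct(1))

lemma tl_cl_pos: "c \<in> set (tl (cl B)) \<Longrightarrow> 1 \<le> c \<and> c \<le> length B"
  by (simp add: cl_Cons0(2) del: upt_Suc)
lemma cl_le: "c \<in> set (cl B) \<Longrightarrow> c \<le> length B"
  by (simp add: cl_def del: upt_Suc)


lemma nth_Cons_pos: "1 \<le> j \<Longrightarrow> (a # L) ! j = L ! (j - 1)"
  by (cases j) auto

lemma arch_height1: "u \<le> length A \<Longrightarrow> height (True # A @ False # B) (Suc u) = 1 + height A u"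
  by (simp add: height_Cons height_append)
lemma arch_height2: "height (True # A @ False # B) (length A + 2 + u) = hgt A + height B u"
proof -
  have "True # A @ False # B = (True # A @ [False]) @ B" by simp
  then show ?thesis using height_app_len[of "True # A @ [False]" B u] by (simp add: add.commute)
qed

lemma ups_arch: "ups (True # A @ False # B) = 0 # map Suc (ups A) @ map (\<lambda>i. i + (length A + 2)) (ups B)"
  by (simp add: ups_Cons ups_append o_def)

lemma cl_archB: "bal A \<Longrightarrow> cl (True # A @ False # B) = [0, length A + 2] @ map (\<lambda>k. k + (length A + 2)) (tl (cl B))"
proof -
  assume b: "bal A"
  have "True # A @ False # B = (True # A @ [False]) @ B" by simp
  then show ?thesis using cl_append[of "True # A @ [False]" B] cl_arch[OF b] b by (simp add: bal_def)
qed

context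
  fixes X Y P2 Q1 Q2 :: "bool list"
  assumes bX: "bal X" and bY: "bal Y" and bP2: "bal P2" and bQ1: "bal Q1" and bQ2: "bal Q2"
    and lQ: "length Q1 = length X + length Y" and lQ2: "length P2 = length Q2"
begin

definition "nX = length (ups X)"
definition "nY = length (ups Y)"
definition "PP = True # X @ False # Y @ P2"
definition "QQ = True # Q1 @ False # Q2"
definition "CY = tl (cl Y)"
definition "C2 = tl (cl P2)"

lemma hX: "hgt X = 0" using bX by (simp add: bal_def)
lemma hY: "hgt Y = 0" using bY by (simp add: bal_def)

lemma nQ1: "length (ups Q1) = nX + nY"
  using bal_even[OF bQ1] bal_even[OF bX] bal_even[OF bY] lQ unfolding nX_def nY_def length_ups by simp

lemma nQ2: "length (ups Q2) = length (ups P2)"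
  using bal_even[OF bQ2] bal_even[OF bP2] lQ2 unfolding length_ups by simp

lemma upsPP: "ups PP = 0 # map Suc (ups X) @ map (\<lambda>i. i + (length X + 2)) (ups Y @ map (\<lambda>i. i + length Y) (ups P2))"
  unfolding PP_def by (simp add: ups_arch ups_append)
lemma upsQQ: "ups QQ = 0 # map Suc (ups Q1) @ map (\<lambda>i. i + (length Q1 + 2)) (ups Q2)"
  unfolding QQ_def by (simp add: ups_arch)
lemma upsP1: "ups (X @ Y) = ups X @ map (\<lambda>i. i + length X) (ups Y)"
  by (simp add: ups_append)

lemma clPP: "cl PP = [0, length X + 2] @ map (\<lambda>k. k + (length X + 2)) (CY @ map (\<lambda>k. k + length Y) C2)"
proof -
  have "cl (Y @ P2) = cl Y @ map (\<lambda>k. k + length Y) C2" unfolding C2_def using cl_append hY by blast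
  then have "tl (cl (Y @ P2)) = CY @ map (\<lambda>k. k + length Y) C2" unfolding CY_def
    using cl_Cons0(1)[of Y] by (metis append_Cons list.sel(3))
  then show ?thesis unfolding PP_def using cl_archB[OF bX, of "Y @ P2"] by simp
qed

lemma clP1: "\<exists>pre. cl (X @ Y) = pre @ [length X] @ map (\<lambda>k. k + length X) CY \<and> (\<forall>c\<in>set pre. c < length X)"
  using cl_append[OF hX, of Y] cl_last[OF hX] unfolding CY_def by auto

lemma CY_range: "c \<in> set CY \<Longrightarrow> 1 \<le> c \<and> c \<le> length Y" unfolding CY_def by (rule tl_cl_pos)
lemma C2_range: "c \<in> set C2 \<Longrightarrow> 1 \<le> c \<and> c \<le> length P2" unfolding C2_def by (rule tl_cl_pos)

lemma cY: "card {c \<in> contacts (X @ Y). length X \<le> c} = 1 + length CY"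
proof -
  obtain pre where p: "cl (X @ Y) = pre @ [length X] @ map (\<lambda>k. k + length X) CY" "\<forall>c\<in>set pre. c < length X"
    using clP1 by blast
  have "filter (\<lambda>c. length X \<le> c) pre = []" using p(2) by (auto simp: filter_empty_conv)
  then show ?thesis unfolding card_filter_cl p(1) by (simp add: o_def)
qed

lemma cP2: "contact P2 = 1 + length C2"
  unfolding contact_cl C2_def using cl_Cons0(1)[of P2] by (metis length_Cons plus_1_eq_Suc)

lemma region0: "Ptilde PP 1 = 0 \<and> Ptilde QQ 1 = 0 \<and> contact_le PP 1 = 1"
proof -
  have "upstart PP 1 = 0" "upstart QQ 1 = 0" unfolding upstart_ups using upsPP upsQQ by simp_all
  then show ?thesis unfolding Ptilde_def contact_le_cl clPP by simp
qed

lemma regionX: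
  assumes "1 \<le> j" "j \<le> nX"
  shows "upstart (X @ Y) j < length X \<and> Ptilde PP (Suc j) = Ptilde (X @ Y) j + 1
    \<and> Ptilde QQ (Suc j) = Ptilde Q1 j + 1 \<and> contact_le PP (Suc j) = 1
    \<and> contact_gt PP (Suc j) = card {c \<in> contacts (X @ Y). length X \<le> c} - 1 + contact P2"
proof -
  define u where "u = ups X ! (j - 1)"
  have jl: "j - 1 < length (ups X)" using assms unfolding nX_def by simp
  have ul: "u < length X" unfolding u_def using ups_lt jl nth_mem by blast
  have u1: "upstart (X @ Y) j = u" unfolding upstart_ups upsP1 u_def using jl by (simp add: nth_Cons_pos nth_append)
  have uP: "upstart PP (Suc j) = Suc u" unfolding upstart_ups upsPP u_def using jl assms(1)
    by (simp add: nth_Cons_pos nth_append)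
  have jq: "j - 1 < length (ups Q1)" using jl nQ1 unfolding nX_def by simp
  have uQ: "upstart QQ (Suc j) = Suc (upstart Q1 j)" unfolding upstart_ups upsQQ using jq assms(1)
    by (simp add: nth_Cons_pos nth_append)
  have uQl: "upstart Q1 j < length Q1" unfolding upstart_ups using ups_lt jq nth_mem by blast
  have "Ptilde PP (Suc j) = height PP (Suc u)" by (simp add: Ptilde_def uP)
  also have "\<dots> = 1 + height X u" unfolding PP_def using arch_height1[of u X "Y @ P2"] ul by simp
  finally have hP: "Ptilde PP (Suc j) = Ptilde (X @ Y) j + 1"
    unfolding Ptilde_def u1 using ul by (simp add: height_append)
  have "Ptilde QQ (Suc j) = height QQ (Suc (upstart Q1 j))" by (simp add: Ptilde_def uQ)
  then have hQ: "Ptilde QQ (Suc j) = Ptilde Q1 j + 1"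
    unfolding Ptilde_def QQ_def using arch_height1[of "upstart Q1 j" Q1 Q2] uQl by simp
  have f1: "filter (\<lambda>k. k \<le> Suc u) (map (\<lambda>k. k + (length X + 2)) (CY @ map (\<lambda>k. k + length Y) C2)) = []"
    using ul by (auto simp: filter_empty_conv)
  have le: "contact_le PP (Suc j) = 1" unfolding contact_le_cl uP clPP filter_append f1 using ul by simp
  have f2: "filter (\<lambda>k. Suc u < k) (map (\<lambda>k. k + (length X + 2)) (CY @ map (\<lambda>k. k + length Y) C2))
     = map (\<lambda>k. k + (length X + 2)) (CY @ map (\<lambda>k. k + length Y) C2)"
    by (intro filter_True) (use ul in auto)
  have gt: "contact_gt PP (Suc j) = 1 + length CY + length C2" unfolding contact_gt_cl uP clPP filter_append f2 using ul by simp
  show ?thesis using u1 ul hP hQ le gt cY cP2 by simp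
qed

lemma regionY:
  assumes "nX < j" "j \<le> nX + nY"
  shows "\<not> upstart (X @ Y) j < length X \<and> Ptilde PP (Suc j) = Ptilde (X @ Y) j
    \<and> Ptilde QQ (Suc j) = Ptilde Q1 j + 1
    \<and> contact_le PP (Suc j) = 1 + card {c \<in> contacts (X @ Y). length X \<le> c \<and> c \<le> upstart (X @ Y) j}
    \<and> contact_gt PP (Suc j) = contact_gt (X @ Y) j + contact P2 - 1"
proof -
  define i where "i = j - 1 - nX"
  define u where "u = ups Y ! i"
  have il: "i < length (ups Y)" using assms unfolding nX_def nY_def i_def by simp
  have ul: "u < length Y" unfolding u_def using ups_lt il nth_mem by blast
  have jx: "\<not> j - 1 < length (ups X)" "j - 1 - length (ups X) = i" using assms unfolding nX_def i_def by auto
  have u1: "upstart (X @ Y) j = length X + u" unfolding upstart_ups upsP1 u_def using jx il by (simp add: nth_Cons_pos nth_append)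
  have jj: "j = Suc (length (ups X) + i)" using jx assms by simp
  have uP: "upstart PP (Suc j) = length X + 2 + u" unfolding upstart_ups upsPP u_def using jx il
    by (subst jj) (simp add: nth_append)
  have jq: "j - 1 < length (ups Q1)" using assms nQ1 by simp
  have uQ: "upstart QQ (Suc j) = Suc (upstart Q1 j)" unfolding upstart_ups upsQQ using jq assms(1)
    by (simp add: nth_Cons_pos nth_append)
  have uQl: "upstart Q1 j < length Q1" unfolding upstart_ups using ups_lt jq nth_mem by blast
  have "Ptilde PP (Suc j) = height PP (length X + 2 + u)" by (simp add: Ptilde_def uP)
  also have "\<dots> = height Y u" unfolding PP_def using arch_height2[of X "Y @ P2" u] ul hX
    by (simp add: height_append)
  finally have hP: "Ptilde PP (Suc j) = Ptilde (X @ Y) j"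
    unfolding Ptilde_def u1 using height_app_len[of X Y u] hX by simp
  have "Ptilde QQ (Suc j) = height QQ (Suc (upstart Q1 j))" by (simp add: Ptilde_def uQ)
  then have hQ: "Ptilde QQ (Suc j) = Ptilde Q1 j + 1"
    unfolding Ptilde_def QQ_def using arch_height1[of "upstart Q1 j" Q1 Q2] uQl by simp
  obtain pre where p: "cl (X @ Y) = pre @ [length X] @ map (\<lambda>k. k + length X) CY" "\<forall>c\<in>set pre. c < length X"
    using clP1 by blast
  have f0: "filter (\<lambda>k. k + length Y \<le> u) C2 = []" using ul C2_range by (force simp: filter_empty_conv)
  have le: "contact_le PP (Suc j) = 2 + length (filter (\<lambda>k. k \<le> u) CY)"
    unfolding contact_le_cl uP clPP filter_append using f0 by (simp add: o_def)
  have f3: "filter (\<lambda>c. length X \<le> c \<and> c \<le> length X + u) pre = []" using p(2) by (auto simp: filter_empty_conv)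
  have cc: "card {c \<in> contacts (X @ Y). length X \<le> c \<and> c \<le> upstart (X @ Y) j} = 1 + length (filter (\<lambda>k. k \<le> u) CY)"
    unfolding card_filter_cl u1 p(1) filter_append f3 by (simp add: o_def)
  have f4: "filter (\<lambda>k. u < k + length Y) C2 = C2" using ul C2_range by (force simp: filter_id_conv)
  have gt: "contact_gt PP (Suc j) = length (filter (\<lambda>k. u < k) CY) + length C2"
    unfolding contact_gt_cl uP clPP filter_append using f4 by (simp add: o_def)
  have f5: "filter (\<lambda>c. length X + u < c) pre = []" using p(2) by (auto simp: filter_empty_conv)
  have gt1: "contact_gt (X @ Y) j = length (filter (\<lambda>k. u < k) CY)"
    unfolding contact_gt_cl u1 p(1) filter_append f5 by (simp add: o_def)
  show ?thesis using u1 hP hQ le cc gt gt1 cP2 by simp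
qed

lemma regionP2:
  assumes "1 \<le> j" "j \<le> length (ups P2)"
  shows "Ptilde PP (Suc (nX + nY) + j) = Ptilde P2 j \<and> Ptilde QQ (Suc (nX + nY) + j) = Ptilde Q2 j
    \<and> contact_le PP (Suc (nX + nY) + j) = card {c \<in> contacts (X @ Y). length X \<le> c} + contact_le P2 j
    \<and> contact_gt PP (Suc (nX + nY) + j) = contact_gt P2 j"
proof -
  define u where "u = ups P2 ! (j - 1)"
  have jl: "j - 1 < length (ups P2)" using assms by simp
  have ul: "u < length P2" unfolding u_def using ups_lt jl nth_mem by blast
  have jj: "Suc (nX + nY) + j - 1 = Suc (length (ups X) + (length (ups Y) + (j - 1)))"
    using assms(1) unfolding nX_def nY_def by simp
  have uP: "upstart PP (Suc (nX + nY) + j) = length X + 2 + length Y + u"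
    unfolding upstart_ups upsPP u_def jj using jl by (simp add: nth_append)
  have jq: "Suc (nX + nY) + j - 1 = Suc (length (ups Q1) + (j - 1))" using assms(1) nQ1 by simp
  have uQ: "upstart QQ (Suc (nX + nY) + j) = length Q1 + 2 + ups Q2 ! (j - 1)"
    unfolding upstart_ups upsQQ jq using jl nQ2 by (simp add: nth_append)
  have e1: "Ptilde PP (Suc (nX + nY) + j) = height PP (length X + 2 + (length Y + u))"
    unfolding Ptilde_def uP by (simp add: add.assoc)
  have hP: "Ptilde PP (Suc (nX + nY) + j) = Ptilde P2 j"
    unfolding e1 unfolding Ptilde_def PP_def upstart_ups u_def[symmetric]
    using arch_height2[of X "Y @ P2" "length Y + u"] hX hY height_app_len[of Y P2 u]
    by (simp add: add.assoc)
  have e2: "Ptilde QQ (Suc (nX + nY) + j) = height QQ (length Q1 + 2 + ups Q2 ! (j - 1))"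
    unfolding Ptilde_def uQ ..
  have hQ: "Ptilde QQ (Suc (nX + nY) + j) = Ptilde Q2 j"
    unfolding e2 unfolding Ptilde_def QQ_def upstart_ups
    using arch_height2[of Q1 Q2 "ups Q2 ! (j - 1)"] bQ1 by (simp add: bal_def)
  have f0: "filter (\<lambda>k. k \<le> length Y + u) CY = CY" using CY_range by (force simp: filter_id_conv)
  have le: "contact_le PP (Suc (nX + nY) + j) = 2 + length CY + length (filter (\<lambda>k. k \<le> u) C2)"
    unfolding contact_le_cl uP clPP filter_append using f0 by (simp add: o_def)
  have le2: "contact_le P2 j = 1 + length (filter (\<lambda>k. k \<le> u) C2)"
    unfolding contact_le_cl upstart_ups u_def[symmetric] C2_def by (subst cl_Cons0(1)) simp
  have f1: "filter (\<lambda>k. length Y + u < k) CY = []" using CY_range by (force simp: filter_empty_conv)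
  have gt: "contact_gt PP (Suc (nX + nY) + j) = length (filter (\<lambda>k. u < k) C2)"
    unfolding contact_gt_cl uP clPP filter_append using f1 by (simp add: o_def)
  have gt2: "contact_gt P2 j = length (filter (\<lambda>k. u < k) C2)"
    unfolding contact_gt_cl upstart_ups u_def[symmetric] C2_def by (subst cl_Cons0(1)) simp
  show ?thesis using hP hQ le le2 gt gt2 cY by simp
qed

end

lemma region0_gen: "bal P \<Longrightarrow> P \<noteq> [] \<Longrightarrow> Ptilde P 1 = 0 \<and> contact_le P 1 = 1 \<and> contact_gt P 1 = contact P - 1"
proof -
  assume b: "bal P" "P \<noteq> []"
  then obtain P' where P: "P = True # P'" using bal_ConsD by (cases P) auto
  have u: "upstart P 1 = 0" unfolding upstart_ups P by (simp add: ups_Cons)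
  obtain T where c: "cl P = 0 # T" "\<forall>c\<in>set T. c \<ge> 1" using cl_Cons0 tl_cl_pos by metis
  have c2: "\<forall>c\<in>set T. 0 < c" using c(2) by (auto simp: Suc_le_eq)
  have le: "contact_le P 1 = 1" unfolding contact_le_cl u c(1) using c2
    by (simp add: filter_empty_conv)
  have gt: "contact_gt P 1 = contact P - 1" unfolding contact_gt_cl contact_cl u c(1) using c2
    by (simp add: filter_id_conv)
  show ?thesis using le gt u by (simp add: Ptilde_def)
qed


lemma rank_bij:
  fixes T :: "nat set"
  assumes fin: "finite T"
  shows "bij_betw (\<lambda>k. card {c \<in> T. k \<le> c}) T {1..card T}"
proof -
  let ?f = "\<lambda>k. card {c \<in> T. k \<le> c}"
  have inj: "inj_on ?f T"
  proof (rule inj_onI)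
    fix a b assume ab: "a \<in> T" "b \<in> T" "?f a = ?f b"
    show "a = b"
    proof (rule ccontr)
      assume "a \<noteq> b"
      then consider "a < b" | "b < a" by linarith
      then show False
      proof cases
        case 1
        have s: "{c \<in> T. b \<le> c} \<subseteq> {c \<in> T. a \<le> c}" using 1 by auto
        have n: "a \<in> {c \<in> T. a \<le> c}" "a \<notin> {c \<in> T. b \<le> c}" using 1 ab by auto
        have "{c \<in> T. b \<le> c} \<subset> {c \<in> T. a \<le> c}" using s n by blast
        then have "?f b < ?f a" using fin by (intro psubset_card_mono) auto
        then show False using ab by simp
      next
        case 2
        have s: "{c \<in> T. a \<le> c} \<subseteq> {c \<in> T. b \<le> c}" using 2 by auto
        have n: "b \<in> {c \<in> T. b \<le> c}" "b \<notin> {c \<in> T. a \<le> c}" using 2 ab by auto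
        have "{c \<in> T. a \<le> c} \<subset> {c \<in> T. b \<le> c}" using s n by blast
        then have "?f a < ?f b" using fin by (intro psubset_card_mono) auto
        then show False using ab by simp
      qed
    qed
  qed
  have sub: "?f ` T \<subseteq> {1..card T}"
  proof
    fix v assume "v \<in> ?f ` T"
    then obtain k where k: "k \<in> T" "v = ?f k" by blast
    have "v \<ge> 1" using k fin by (simp add: Suc_le_eq card_gt_0_iff) blast
    moreover have "v \<le> card T" using k fin by (simp add: card_mono)
    ultimately show "v \<in> {1..card T}" by simp
  qed
  have "card (?f ` T) = card {1..card T}" using card_image[OF inj] by simp
  then have "?f ` T = {1..card T}" using sub by (intro card_subset_eq) auto
  then show ?thesis using inj unfolding bij_betw_def by simp
qed

lemma rank_sum: "finite (T :: nat set) \<Longrightarrow> (\<Sum>k\<in>T. f (card {c \<in> T. k \<le> c})) = (\<Sum>i=1..card T. f i)"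
  using sum.reindex_bij_betw[OF rank_bij, of T f] by simp

lemma cnt1: assumes "finite (S :: nat set)"
  shows "(\<Sum>k\<in>{k \<in> S. u < k}. f (card {c \<in> S. k \<le> c})) = (\<Sum>i=1..card {c \<in> S. u < c}. f i)"
proof -
  have "(\<Sum>k\<in>{k \<in> S. u < k}. f (card {c \<in> S. k \<le> c})) = (\<Sum>k\<in>{k \<in> S. u < k}. f (card {c \<in> {k \<in> S. u < k}. k \<le> c}))"
    by (intro sum.cong refl arg_cong[where f = f] arg_cong[where f = card]) auto
  also have "\<dots> = (\<Sum>i=1..card {c \<in> S. u < c}. f i)" using assms by (intro rank_sum) auto
  finally show ?thesis .
qed

lemma cnt2: assumes "finite (S :: nat set)"
  shows "(\<Sum>k\<in>{k \<in> S. k \<le> u}. f (card {c \<in> S. k \<le> c \<and> c \<le> u})) = (\<Sum>i=1..card {c \<in> S. c \<le> u}. f i)"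
proof -
  have "(\<Sum>k\<in>{k \<in> S. k \<le> u}. f (card {c \<in> S. k \<le> c \<and> c \<le> u})) = (\<Sum>k\<in>{k \<in> S. k \<le> u}. f (card {c \<in> {k \<in> S. k \<le> u}. k \<le> c}))"
    by (intro sum.cong refl arg_cong[where f = f] arg_cong[where f = card]) auto
  also have "\<dots> = (\<Sum>i=1..card {c \<in> S. c \<le> u}. f i)" using assms by (intro rank_sum) auto
  finally show ?thesis .
qed

lemma geo1: "(\<Sum>i=1..g. (y::real) ^ (i - 1)) = (\<Sum>i<g. y ^ i)"
  by (simp add: sum.atLeast1_atMost_eq)
lemma geo2: "(\<Sum>i=1..a. (x::real) ^ (1 + i)) = x ^ 2 * (\<Sum>i<a. x ^ i)"
  by (simp add: sum.atLeast1_atMost_eq sum_distrib_left power_add power2_eq_square mult.assoc)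
lemma geo3: "(\<Sum>i=1..c. (x::real) ^ (i + b)) = x ^ b * x * (\<Sum>i<c. x ^ i)"
  by (simp add: sum.atLeast1_atMost_eq sum_distrib_left power_add mult_ac)


definition Wt :: "real \<Rightarrow> real \<Rightarrow> real \<Rightarrow> real \<Rightarrow> bool list \<Rightarrow> bool list \<Rightarrow> nat \<Rightarrow> real" where
  "Wt x y r s P Q j = r ^ nat (Ptilde P j) * s ^ nat (Ptilde Q j) * x ^ contact_le P j * y ^ contact_gt P j"

lemma Ptilde_nonneg: "bal P \<Longrightarrow> Ptilde P j \<ge> 0"
  by (simp add: Ptilde_def bal_def)

lemma nat_plus1: "h \<ge> 0 \<Longrightarrow> nat (h + 1) = Suc (nat h)" by simp

lemma split_range: "(\<Sum>j=2..Suc (n1 + n2). g j) = (\<Sum>j=1..n1. g (Suc j)) + (\<Sum>j=1..n2. g (Suc n1 + j))"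
proof -
  have "(\<Sum>j=2..Suc (n1 + n2). g j) = (\<Sum>j=2..Suc n1 + n2. g j)" by simp
  also have "\<dots> = (\<Sum>j=2..Suc n1. g j) + (\<Sum>j=Suc n1 + 1..Suc n1 + n2. g j)"
    by (rule sum.ub_add_nat) simp
  also have "(\<Sum>j=2..Suc n1. g j) = (\<Sum>j=1..n1. g (Suc j))"
    using sum.shift_bounds_cl_Suc_ivl[of g 1 n1] by (simp add: numeral_2_eq_2)
  also have "(\<Sum>j=Suc n1 + 1..Suc n1 + n2. g j) = (\<Sum>j=1..n2. g (Suc n1 + j))"
    using sum.shift_bounds_cl_nat_ivl[of g 1 "Suc n1" n2] by (simp add: add.commute)
  finally show ?thesis .
qed

lemma pair_identity:
  fixes x y r s :: real
  assumes i1: "(P1, Q1) \<in> intervals n1" and i2: "(P2, Q2) \<in> intervals n2"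
  shows "(\<Sum>k\<in>contacts P1. \<Sum>j=2..Suc (n1 + n2). Wt x y r s (fst (build (P1, Q1) k (P2, Q2))) (snd (build (P1, Q1) k (P2, Q2))) j)
   = (\<Sum>j=1..n1. r ^ nat (Ptilde P1 j) * s ^ nat (Ptilde Q1 j) * (r * s * x * y ^ contact P2 * (\<Sum>i<contact_gt P1 j. y ^ i)
        + s * x ^ 2 * (\<Sum>i<contact_le P1 j. x ^ i) * y ^ (contact_gt P1 j + contact P2 - 1)))
     + (\<Sum>j=1..n2. Wt x y r s P2 Q2 j * x * (\<Sum>i<contact P1. x ^ i))"
proof -
  define S where "S = contacts P1"
  have finS: "finite S" unfolding S_def by (rule finite_contacts)
  have b: "bal P1" "bal Q1" "length P1 = 2 * n1" "P1 \<preceq> Q1" "bal P2" "bal Q2" "length P2 = 2 * n2" "P2 \<preceq> Q2"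
    using i1 i2 intervals_iff by blast+
  have lQ1: "length Q1 = length P1" using le_len b by metis
  have lQ2: "length P2 = length Q2" using le_len b by metis
  have n2: "length (ups P2) = n2" using bal_even[OF b(5)] b(7) unfolding length_ups by simp
  have c2pos: "contact P2 \<ge> 1"
    unfolding contact_cl using cl_nonempty[of P2] by (cases "cl P2") auto
  define c2 where "c2 = contact P2"
  define F where "F k j = (if upstart P1 j < k
      then r * s * r ^ nat (Ptilde P1 j) * s ^ nat (Ptilde Q1 j) * x * (y ^ (card {c \<in> S. k \<le> c} - 1) * y ^ c2)
      else s * r ^ nat (Ptilde P1 j) * s ^ nat (Ptilde Q1 j) * x ^ (1 + card {c \<in> S. k \<le> c \<and> c \<le> upstart P1 j})
         * y ^ (contact_gt P1 j + c2 - 1))" for k j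
  define G where "G k j = r ^ nat (Ptilde P2 j) * s ^ nat (Ptilde Q2 j) * x ^ (card {c \<in> S. k \<le> c} + contact_le P2 j)
      * y ^ contact_gt P2 j" for k j
  have perk: "(\<Sum>j=2..Suc (n1 + n2). Wt x y r s (fst (build (P1, Q1) k (P2, Q2))) (snd (build (P1, Q1) k (P2, Q2))) j)
      = (\<Sum>j=1..n1. F k j) + (\<Sum>j=1..n2. G k j)" if kS: "k \<in> S" for k
  proof -
    define X where "X = take k P1"
    define Y where "Y = drop k P1"
    have bXY: "bal X" "bal Y" using contact_split[OF b(1)] kS unfolding S_def X_def Y_def by blast+
    have kl: "k \<le> length P1" using kS unfolding S_def contacts_def by simp
    have XY: "X @ Y = P1" "length X = k" unfolding X_def Y_def using kl by simp_all
    have lq: "length Q1 = length X + length Y" using XY lQ1 by (metis length_append)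
    note ctx = bXY b(5) b(2) b(6) lq lQ2
    have nXY: "nX X + nY Y = n1" unfolding nX_def[OF ctx] nY_def[OF ctx] length_ups
      using bal_even[OF b(1)] b(3) XY(1) by (metis filter_append length_append mult_left_cancel zero_neq_numeral)
    have bd: "build (P1, Q1) k (P2, Q2) = (PP X Y P2, QQ Q1 Q2)"
      unfolding build_def fst_conv snd_conv X_def[symmetric] Y_def[symmetric]
      using PP_def[OF ctx] QQ_def[OF ctx] by simp
    have pos1: "Ptilde P1 j \<ge> 0" "Ptilde Q1 j \<ge> 0" for j using Ptilde_nonneg b by blast+
    have A: "Wt x y r s (PP X Y P2) (QQ Q1 Q2) (Suc j) = F k j" if j: "1 \<le> j" "j \<le> n1" for j
    proof (cases "j \<le> nX X")
      case True
      from regionX[OF ctx j(1) True] XY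
      have R: "upstart P1 j < k" "Ptilde (PP X Y P2) (Suc j) = Ptilde P1 j + 1"
        "Ptilde (QQ Q1 Q2) (Suc j) = Ptilde Q1 j + 1" "contact_le (PP X Y P2) (Suc j) = 1"
        "contact_gt (PP X Y P2) (Suc j) = card {c \<in> S. k \<le> c} - 1 + c2" unfolding S_def c2_def by auto
      show ?thesis unfolding Wt_def F_def R(2-5) using R(1) pos1[of j]
        by (simp add: nat_plus1 power_add mult_ac)
    next
      case False
      from regionY[OF ctx _ ] False j nXY XY
      have R: "\<not> upstart P1 j < k" "Ptilde (PP X Y P2) (Suc j) = Ptilde P1 j"
        "Ptilde (QQ Q1 Q2) (Suc j) = Ptilde Q1 j + 1"
        "contact_le (PP X Y P2) (Suc j) = 1 + card {c \<in> S. k \<le> c \<and> c \<le> upstart P1 j}"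
        "contact_gt (PP X Y P2) (Suc j) = contact_gt P1 j + c2 - 1" unfolding S_def c2_def
        by (metis not_le)+
      show ?thesis unfolding Wt_def F_def R(2-5) using R(1) pos1[of j]
        by (simp add: nat_plus1 mult_ac)
    qed
    have B: "Wt x y r s (PP X Y P2) (QQ Q1 Q2) (Suc n1 + j) = G k j" if j: "1 \<le> j" "j \<le> n2" for j
    proof -
      from regionP2[OF ctx j(1)] j n2 nXY XY
      have R: "Ptilde (PP X Y P2) (Suc n1 + j) = Ptilde P2 j" "Ptilde (QQ Q1 Q2) (Suc n1 + j) = Ptilde Q2 j"
        "contact_le (PP X Y P2) (Suc n1 + j) = card {c \<in> S. k \<le> c} + contact_le P2 j"
        "contact_gt (PP X Y P2) (Suc n1 + j) = contact_gt P2 j" unfolding S_def by auto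
      show ?thesis unfolding Wt_def G_def R ..
    qed
    have A': "(\<Sum>j=1..n1. Wt x y r s (PP X Y P2) (QQ Q1 Q2) (Suc j)) = (\<Sum>j=1..n1. F k j)"
      by (rule sum.cong[OF refl]) (rule A; simp)
    have B': "(\<Sum>j=1..n2. Wt x y r s (PP X Y P2) (QQ Q1 Q2) (Suc n1 + j)) = (\<Sum>j=1..n2. G k j)"
      by (rule sum.cong[OF refl]) (rule B; simp)
    show ?thesis unfolding bd fst_conv snd_conv split_range A' B' ..
  qed
  have "(\<Sum>k\<in>contacts P1. \<Sum>j=2..Suc (n1 + n2). Wt x y r s (fst (build (P1, Q1) k (P2, Q2))) (snd (build (P1, Q1) k (P2, Q2))) j)
      = (\<Sum>k\<in>S. (\<Sum>j=1..n1. F k j) + (\<Sum>j=1..n2. G k j))" unfolding S_def[symmetric] using perk by (rule sum.cong[OF refl])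
  also have "\<dots> = (\<Sum>j=1..n1. \<Sum>k\<in>S. F k j) + (\<Sum>j=1..n2. \<Sum>k\<in>S. G k j)"
    by (simp add: sum.distrib sum.swap[of _ S])
  finally have main: "(\<Sum>k\<in>contacts P1. \<Sum>j=2..Suc (n1 + n2). Wt x y r s (fst (build (P1, Q1) k (P2, Q2))) (snd (build (P1, Q1) k (P2, Q2))) j)
      = (\<Sum>j=1..n1. \<Sum>k\<in>S. F k j) + (\<Sum>j=1..n2. \<Sum>k\<in>S. G k j)" .
  have FF: "(\<Sum>k\<in>S. F k j) = r ^ nat (Ptilde P1 j) * s ^ nat (Ptilde Q1 j) * (r * s * x * y ^ contact P2 * (\<Sum>i<contact_gt P1 j. y ^ i)
        + s * x ^ 2 * (\<Sum>i<contact_le P1 j. x ^ i) * y ^ (contact_gt P1 j + contact P2 - 1))" for j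
  proof -
    define u where "u = upstart P1 j"
    define a1 where "a1 = r * s * r ^ nat (Ptilde P1 j) * s ^ nat (Ptilde Q1 j) * x * y ^ c2"
    define a2 where "a2 = s * r ^ nat (Ptilde P1 j) * s ^ nat (Ptilde Q1 j) * y ^ (contact_gt P1 j + c2 - 1)"
    have "(\<Sum>k\<in>S. F k j) = (\<Sum>k\<in>S. if u < k then a1 * y ^ (card {c \<in> S. k \<le> c} - 1)
         else a2 * x ^ (1 + card {c \<in> S. k \<le> c \<and> c \<le> u}))"
      unfolding F_def u_def a1_def a2_def by (intro sum.cong refl) (simp add: mult_ac)
    also have "\<dots> = (\<Sum>k\<in>{k \<in> S. u < k}. a1 * y ^ (card {c \<in> S. k \<le> c} - 1))
        + (\<Sum>k\<in>{k \<in> S. k \<le> u}. a2 * x ^ (1 + card {c \<in> S. k \<le> c \<and> c \<le> u}))"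
    proof -
      have e1: "S \<inter> {k. u < k} = {k \<in> S. u < k}" "S \<inter> - {k. u < k} = {k \<in> S. k \<le> u}" by auto
      show ?thesis by (subst sum.If_cases[OF finS]) (simp only: e1)
    qed
    also have "\<dots> = a1 * (\<Sum>i=1..card {c \<in> S. u < c}. y ^ (i - 1)) + a2 * (\<Sum>i=1..card {c \<in> S. c \<le> u}. x ^ (1 + i))"
      by (simp only: sum_distrib_left[symmetric] cnt1[OF finS, where u=u and f="\<lambda>i. y ^ (i - 1)"]
          cnt2[OF finS, where u=u and f="\<lambda>i. x ^ (1 + i)"])
    also have "\<dots> = a1 * (\<Sum>i<contact_gt P1 j. y ^ i) + a2 * (x ^ 2 * (\<Sum>i<contact_le P1 j. x ^ i))"
      unfolding geo1 geo2 contact_gt_def contact_le_def u_def S_def by simp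
    finally show ?thesis unfolding a1_def a2_def c2_def by (simp add: algebra_simps)
  qed
  have GG: "(\<Sum>k\<in>S. G k j) = Wt x y r s P2 Q2 j * x * (\<Sum>i<contact P1. x ^ i)" for j
  proof -
    define a where "a = r ^ nat (Ptilde P2 j) * s ^ nat (Ptilde Q2 j) * y ^ contact_gt P2 j"
    have "(\<Sum>k\<in>S. G k j) = a * (\<Sum>k\<in>S. x ^ (card {c \<in> S. k \<le> c} + contact_le P2 j))"
      unfolding G_def a_def sum_distrib_left by (intro sum.cong refl) (simp add: mult_ac)
    also have "\<dots> = a * (\<Sum>i=1..card S. x ^ (i + contact_le P2 j))"
      using rank_sum[OF finS, of "\<lambda>i. x ^ (i + contact_le P2 j)"] by simp
    also have "\<dots> = a * (x ^ contact_le P2 j * x * (\<Sum>i<card S. x ^ i))" unfolding geo3 ..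
    finally show ?thesis unfolding a_def Wt_def contact_def S_def by (simp add: mult_ac)
  qed
  show ?thesis unfolding main FF GG ..
qed


definition "Jc x y r s m = (\<Sum>pq\<in>intervals m. \<Sum>j=1..m. Wt x y r s (fst pq) (snd pq) j)"
definition "Fc x m = (\<Sum>pq\<in>intervals m. (x::real) ^ contact (fst pq))"

lemma Jgf_nth: "fps_nth (Jgf x y r s) m = Jc x y r s m"
  by (simp add: Jgf_def Jc_def Wt_def case_prod_beta)
lemma Fgf_nth: "fps_nth (Fgf x) m = Fc x m"
  by (simp add: Fgf_def Fc_def case_prod_beta)

lemma intervals_0: "intervals 0 = {([], [])}"
  unfolding intervals_def dyck_def tamari_le_def by auto

lemma contact_Nil: "contact [] = 1"
  by (simp add: contact_cl cl_def)

lemma contact_pos: "contact P \<ge> 1"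
  unfolding contact_cl using cl_nonempty[of P] by (cases "cl P") auto

lemma geo: "(y::real) \<noteq> 1 \<Longrightarrow> (y ^ g - 1) / (y - 1) = (\<Sum>i<g. y ^ i)"
  by (simp add: geometric_sum)

lemma Wt1: "(P, Q) \<in> intervals (Suc n) \<Longrightarrow> Wt x y r s P Q 1 = x * y ^ (contact P - 1)"
proof -
  assume a: "(P, Q) \<in> intervals (Suc n)"
  then have b: "bal P" "bal Q" "P \<noteq> []" "Q \<noteq> []" using intervals_iff le_len by (metis length_0_conv nat.distinct(1) mult_is_0 zero_neq_numeral)+
  show ?thesis using region0_gen[OF b(1,3)] region0_gen[OF b(2,4)] by (simp add: Wt_def)
qed

lemma sum_rev_atMost: "(\<Sum>i\<le>n. f i (n - i)) = (\<Sum>i\<le>(n::nat). f (n - i) i)"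
  by (rule sum.reindex_bij_witness[where i="\<lambda>i. n - i" and j="\<lambda>i. n - i"]) auto

context
  fixes x y r s :: real
  assumes x1: "x \<noteq> 1" and y1: "y \<noteq> 1" and y0: "y \<noteq> 0"
begin

definition "A2 n1 pq1 pq2 = (\<Sum>j=1..n1. r ^ nat (Ptilde (fst pq1) j) * s ^ nat (Ptilde (snd pq1) j) *
   (r * s * x * y ^ contact (fst pq2) * (\<Sum>i<contact_gt (fst pq1) j. y ^ i)))"
definition "A3 n1 pq1 pq2 = (\<Sum>j=1..n1. r ^ nat (Ptilde (fst pq1) j) * s ^ nat (Ptilde (snd pq1) j) *
   (s * x ^ 2 * (\<Sum>i<contact_le (fst pq1) j. x ^ i) * y ^ (contact_gt (fst pq1) j + contact (fst pq2) - 1)))"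
definition "A4 n2 pq1 pq2 = (\<Sum>j=1..n2. Wt x y r s (fst pq2) (snd pq2) j * x * (\<Sum>i<contact (fst pq1). x ^ i))"

lemma Jc_Suc: "Jc x y r s (Suc n) = x / y * Fc y (Suc n) +
   (\<Sum>n1\<le>n. \<Sum>pq1\<in>intervals n1. \<Sum>pq2\<in>intervals (n - n1). A2 n1 pq1 pq2 + A3 n1 pq1 pq2 + A4 (n - n1) pq1 pq2)"
proof -
  have "Jc x y r s (Suc n) = (\<Sum>pq\<in>intervals (Suc n). Wt x y r s (fst pq) (snd pq) 1
      + (\<Sum>j=2..Suc n. Wt x y r s (fst pq) (snd pq) j))"
    unfolding Jc_def by (intro sum.cong refl) (simp add: sum.atLeast_Suc_atMost numeral_2_eq_2)
  also have "\<dots> = (\<Sum>pq\<in>intervals (Suc n). x * y ^ (contact (fst pq) - 1))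
      + (\<Sum>pq\<in>intervals (Suc n). \<Sum>j=2..Suc n. Wt x y r s (fst pq) (snd pq) j)"
  proof -
    have "(\<Sum>pq\<in>intervals (Suc n). Wt x y r s (fst pq) (snd pq) 1) = (\<Sum>pq\<in>intervals (Suc n). x * y ^ (contact (fst pq) - 1))"
      by (rule sum.cong[OF refl]) (metis Wt1 prod.collapse)
    then show ?thesis by (simp add: sum.distrib)
  qed
  also have "(\<Sum>pq\<in>intervals (Suc n). x * y ^ (contact (fst pq) - 1)) = x / y * Fc y (Suc n)"
  proof -
    have "x * y ^ (contact P - 1) = x / y * y ^ contact P" for P
      using contact_pos[of P] y0 by (cases "contact P") (auto simp: field_simps)
    then show ?thesis unfolding Fc_def by (simp add: sum_distrib_left)
  qed
  also have "(\<Sum>pq\<in>intervals (Suc n). \<Sum>j=2..Suc n. Wt x y r s (fst pq) (snd pq) j)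
     = (\<Sum>n1\<le>n. \<Sum>pq1\<in>intervals n1. \<Sum>pq2\<in>intervals (n - n1). \<Sum>k\<in>contacts (fst pq1).
          \<Sum>j=2..Suc (n1 + (n - n1)). Wt x y r s (fst (build pq1 k pq2)) (snd (build pq1 k pq2)) j)"
    by (subst sum_intervals_Suc) (intro sum.cong refl, simp)
  also have "\<dots> = (\<Sum>n1\<le>n. \<Sum>pq1\<in>intervals n1. \<Sum>pq2\<in>intervals (n - n1). A2 n1 pq1 pq2 + A3 n1 pq1 pq2 + A4 (n - n1) pq1 pq2)"
  proof (intro sum.cong refl)
    fix n1 pq1 pq2 assume m: "pq1 \<in> intervals n1" "pq2 \<in> intervals (n - n1)"
    obtain P1 Q1 P2 Q2 where p: "pq1 = (P1, Q1)" "pq2 = (P2, Q2)" by (cases pq1, cases pq2) auto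
    show "(\<Sum>k\<in>contacts (fst pq1). \<Sum>j=2..Suc (n1 + (n - n1)). Wt x y r s (fst (build pq1 k pq2)) (snd (build pq1 k pq2)) j)
        = A2 n1 pq1 pq2 + A3 n1 pq1 pq2 + A4 (n - n1) pq1 pq2"
      using pair_identity[of P1 Q1 n1 P2 Q2 "n - n1" x y r s] m p
      unfolding A2_def A3_def A4_def by (simp add: sum.distrib distrib_left)
  qed
  finally show ?thesis .
qed

end


lemma triple1: "(a::real) * ((\<Sum>p\<in>A. \<Sum>j\<in>J p. f p j) * (\<Sum>q\<in>B. g q)) = (\<Sum>p\<in>A. \<Sum>q\<in>B. \<Sum>j\<in>J p. a * f p j * g q)"
  apply (simp add: sum_product sum_distrib_left sum_distrib_right mult_ac)
  apply (rule sum.cong[OF refl])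
  apply (rule sum.swap)
  done

lemma triple2: "(a::real) * ((\<Sum>q\<in>B. \<Sum>j\<in>J. g q j) * (\<Sum>p\<in>A. f p)) = (\<Sum>p\<in>A. \<Sum>q\<in>B. \<Sum>j\<in>J. a * g q j * f p)"
  by (simp add: sum_product sum_distrib_left sum_distrib_right mult_ac sum.swap[of _ A])

lemma coeff_shape: "fps_nth (fps_const (c::real) * fps_X * A * B) (Suc n) = c * (\<Sum>i\<le>n. fps_nth A i * fps_nth B (n - i))"
proof -
  have "fps_const c * fps_X * A * B = fps_const c * (fps_X * (A * B))" by (simp add: mult_ac)
  then show ?thesis by (simp only: fps_mult_left_const_nth fps_X_mult_nth) (simp add: fps_mult_nth atLeast0AtMost)
qed

lemma coeff_shape0: "fps_nth (fps_const (c::real) * fps_X * A * B) 0 = 0"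
proof -
  have "fps_const c * fps_X * A * B = fps_const c * (fps_X * (A * B))" by (simp add: mult_ac)
  then show ?thesis by simp
qed

context
  fixes x y r s :: real
  assumes x1: "x \<noteq> 1" and y1: "y \<noteq> 1" and y0: "y \<noteq> 0"
begin

lemma Wt_parts: "Wt x y r s P Q j = r ^ nat (Ptilde P j) * s ^ nat (Ptilde Q j) * x ^ contact_le P j * y ^ contact_gt P j"
  by (simp add: Wt_def)

lemma T2: "r * s * x / (y - 1) * (\<Sum>i\<le>n. (Jc 1 y r s i - Jc 1 1 r s i) * Fc y (n - i))
   = (\<Sum>n1\<le>n. \<Sum>pq1\<in>intervals n1. \<Sum>pq2\<in>intervals (n - n1). A2 x y r s n1 pq1 pq2)"
proof -
  have "r * s * x / (y - 1) * (\<Sum>i\<le>n. (Jc 1 y r s i - Jc 1 1 r s i) * Fc y (n - i))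
     = (\<Sum>n1\<le>n. r * s * x / (y - 1) * ((\<Sum>pq1\<in>intervals n1. \<Sum>j\<in>{1..n1}. Wt 1 y r s (fst pq1) (snd pq1) j - Wt 1 1 r s (fst pq1) (snd pq1) j)
         * (\<Sum>pq2\<in>intervals (n - n1). y ^ contact (fst pq2))))"
    unfolding Jc_def Fc_def by (simp add: sum_distrib_left sum_subtractf)
  also have "\<dots> = (\<Sum>n1\<le>n. \<Sum>pq1\<in>intervals n1. \<Sum>pq2\<in>intervals (n - n1). A2 x y r s n1 pq1 pq2)"
    unfolding triple1 A2_def[OF x1 y1 y0]
  proof (intro sum.cong refl)
    fix n1 j :: nat and pq1 pq2 :: "bool list \<times> bool list"
    show "r * s * x / (y - 1) * (Wt 1 y r s (fst pq1) (snd pq1) j - Wt 1 1 r s (fst pq1) (snd pq1) j) * y ^ contact (fst pq2)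
      = r ^ nat (Ptilde (fst pq1) j) * s ^ nat (Ptilde (snd pq1) j) *
        (r * s * x * y ^ contact (fst pq2) * (\<Sum>i<contact_gt (fst pq1) j. y ^ i))"
      unfolding Wt_def geo[OF y1, symmetric] using y1 by (simp add: field_simps)
  qed
  finally show ?thesis .
qed

lemma T3: "s * x ^ 2 / ((x - 1) * y) * (\<Sum>i\<le>n. (Jc x y r s i - Jc 1 y r s i) * Fc y (n - i))
   = (\<Sum>n1\<le>n. \<Sum>pq1\<in>intervals n1. \<Sum>pq2\<in>intervals (n - n1). A3 x y r s n1 pq1 pq2)"
proof -
  have "s * x ^ 2 / ((x - 1) * y) * (\<Sum>i\<le>n. (Jc x y r s i - Jc 1 y r s i) * Fc y (n - i))
     = (\<Sum>n1\<le>n. s * x ^ 2 / ((x - 1) * y) * ((\<Sum>pq1\<in>intervals n1. \<Sum>j\<in>{1..n1}. Wt x y r s (fst pq1) (snd pq1) j - Wt 1 y r s (fst pq1) (snd pq1) j)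
         * (\<Sum>pq2\<in>intervals (n - n1). y ^ contact (fst pq2))))"
    unfolding Jc_def Fc_def by (simp add: sum_distrib_left sum_subtractf)
  also have "\<dots> = (\<Sum>n1\<le>n. \<Sum>pq1\<in>intervals n1. \<Sum>pq2\<in>intervals (n - n1). A3 x y r s n1 pq1 pq2)"
    unfolding triple1 A3_def[OF x1 y1 y0]
  proof (intro sum.cong refl)
    fix n1 j :: nat and pq1 pq2 :: "bool list \<times> bool list"
    have c: "y ^ (contact_gt (fst pq1) j + contact (fst pq2) - 1) = y ^ contact_gt (fst pq1) j * y ^ contact (fst pq2) / y"
      using contact_pos[of "fst pq2"] y0 by (cases "contact (fst pq2)") (auto simp: field_simps power_add)
    have x1': "x - 1 \<noteq> 0" using x1 by simp
    show "s * x ^ 2 / ((x - 1) * y) * (Wt x y r s (fst pq1) (snd pq1) j - Wt 1 y r s (fst pq1) (snd pq1) j) * y ^ contact (fst pq2)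
      = r ^ nat (Ptilde (fst pq1) j) * s ^ nat (Ptilde (snd pq1) j) *
        (s * x ^ 2 * (\<Sum>i<contact_le (fst pq1) j. x ^ i) * y ^ (contact_gt (fst pq1) j + contact (fst pq2) - 1))"
      unfolding Wt_def geo[OF x1, symmetric] c using x1' y0 by (simp add: field_simps)
  qed
  finally show ?thesis .
qed

lemma T4: "x / (x - 1) * (\<Sum>i\<le>n. Jc x y r s i * (Fc x (n - i) - Fc 1 (n - i)))
   = (\<Sum>n1\<le>n. \<Sum>pq1\<in>intervals n1. \<Sum>pq2\<in>intervals (n - n1). A4 x y r s (n - n1) pq1 pq2)"
proof -
  have "x / (x - 1) * (\<Sum>i\<le>n. Jc x y r s i * (Fc x (n - i) - Fc 1 (n - i)))
     = x / (x - 1) * (\<Sum>n1\<le>n. Jc x y r s (n - n1) * (Fc x n1 - Fc 1 n1))"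
    using sum_rev_atMost[of "\<lambda>i k. Jc x y r s i * (Fc x k - Fc 1 k)" n] by simp
  also have "\<dots> = (\<Sum>n1\<le>n. x / (x - 1) * ((\<Sum>pq2\<in>intervals (n - n1). \<Sum>j\<in>{1..n - n1}. Wt x y r s (fst pq2) (snd pq2) j)
         * (\<Sum>pq1\<in>intervals n1. x ^ contact (fst pq1) - 1)))"
    unfolding Jc_def Fc_def by (simp add: sum_distrib_left sum_subtractf)
  also have "\<dots> = (\<Sum>n1\<le>n. \<Sum>pq1\<in>intervals n1. \<Sum>pq2\<in>intervals (n - n1). A4 x y r s (n - n1) pq1 pq2)"
    unfolding triple2 A4_def[OF x1 y1 y0]
  proof (intro sum.cong refl)
    fix n1 j :: nat and pq1 pq2 :: "bool list \<times> bool list"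
    have x1': "x - 1 \<noteq> 0" using x1 by simp
    show "x / (x - 1) * Wt x y r s (fst pq2) (snd pq2) j * (x ^ contact (fst pq1) - 1)
       = Wt x y r s (fst pq2) (snd pq2) j * x * (\<Sum>i<contact (fst pq1). x ^ i)"
      unfolding geo[OF x1, symmetric] using x1' by (simp add: field_simps)
  qed
  finally show ?thesis .
qed

lemma main_coeff: "Jc x y r s (Suc n) = x / y * Fc y (Suc n)
   + r * s * x / (y - 1) * (\<Sum>i\<le>n. (Jc 1 y r s i - Jc 1 1 r s i) * Fc y (n - i))
   + s * x ^ 2 / ((x - 1) * y) * (\<Sum>i\<le>n. (Jc x y r s i - Jc 1 y r s i) * Fc y (n - i))
   + x / (x - 1) * (\<Sum>i\<le>n. Jc x y r s i * (Fc x (n - i) - Fc 1 (n - i)))"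
  unfolding T2 T3 T4 Jc_Suc[OF x1 y1 y0] by (simp add: sum.distrib add.assoc)

end


theorem proposition4p1:
  fixes x y r s :: real
  assumes "x \<noteq> 1" and "y \<noteq> 1" and "y \<noteq> 0"
  shows "Jgf x y r s =
      fps_const (x / y) * (Fgf y - fps_const y)
    + fps_const (r * s * x / (y - 1)) * fps_X * (Jgf 1 y r s - Jgf 1 1 r s) * Fgf y
    + fps_const (s * x ^ 2 / ((x - 1) * y)) * fps_X * (Jgf x y r s - Jgf 1 y r s) * Fgf y
    + fps_const (x / (x - 1)) * fps_X * Jgf x y r s * (Fgf x - Fgf 1)"
proof (rule fps_ext)
  fix m
  show "fps_nth (Jgf x y r s) m = fps_nth (fps_const (x / y) * (Fgf y - fps_const y)
    + fps_const (r * s * x / (y - 1)) * fps_X * (Jgf 1 y r s - Jgf 1 1 r s) * Fgf y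
    + fps_const (s * x ^ 2 / ((x - 1) * y)) * fps_X * (Jgf x y r s - Jgf 1 y r s) * Fgf y
    + fps_const (x / (x - 1)) * fps_X * Jgf x y r s * (Fgf x - Fgf 1)) m"
  proof (cases m)
    case 0
    have "Fc y 0 = y" unfolding Fc_def intervals_0 by (simp add: contact_Nil)
    then show ?thesis unfolding 0 fps_add_nth coeff_shape0
      by (simp add: Jgf_nth Fgf_nth Jc_def)
  next
    case (Suc n)
    show ?thesis unfolding Suc fps_add_nth coeff_shape fps_mult_left_const_nth fps_sub_nth fps_nth_fps_const
      Jgf_nth Fgf_nth using main_coeff[OF assms, where r=r and s=s and n=n] by simp
  qed
qed


end
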